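(* For every $n\ge 1$, the number of permutation tableaux $T$ of length $n$ with $\mathrm{inv}(T)=0$ equals the Bell number $B_n$, the number of set partitions of $[n]$.
   Context: Permutation tableaux. Draw a Ferrers diagram in English convention: rows are left-justified, row lengths weakly decrease from top to bottom, and every column is nonempty. Rows of length zero are allowed. A permutation tableau $T$ is a filling of the cells of such a diagram with 0's and 1's satisfying two conditions: (i) every column contains at least one 1; (ii) no cell containing 0 has both a 1 above it in its column and a 1 to its left in its row. Its length $n$ is the number of rows plus the number of columns. Labels. The southeast boundary path of $n$ unit south/west steps, from the top-right corner to the bottom-left corner, has its steps labeled $1,\ldots,n$ in order. Each row gets the label of its south step (at the right end of the row), and each column the label of its west step. $(i,j)$ denotes the cell in row $i$ and column $j$. Zeros, ones and rows. A 1 is topmost if there is no 1 above it in its column. A 0 is restricted if there is a 1 above it in its column. A rightmost restricted 0 is a restricted 0 with no restricted 0 to its right in its row. A row is unrestricted if it contains no restricted 0; empty rows are unrestricted. Dots. Black dots are placed on the topmost 1's (one per column), each labeled by its column label. White dots are placed on the rightmost restricted 0's (one per restricted row), each labeled by its row label. Alternating paths. An alternating path is a sequence of dots, identified with the sequence of their labels, built as follows. - From a white dot in cell $(i,j)$, the next dot is the black dot of column $j$. - From a black dot in cell $(i,j)$: if row $i$ is unrestricted, the path ends; otherwise the next dot is the white dot of row $i$. - If $k$ is a column label or the label of a restricted row, $P_k$ is the path starting at the dot labeled $k$. - If $r$ is the label of an unrestricted row, $P_r$ is the empty path. $P_k$ is contained in a path $P$ if $k$ labels a dot of $P$. Empty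 paths are contained in no path. Order on paths. Let $P_a,P_b$ be two paths, neither contained in the other. Remove their longest common final segment, obtaining $P'_a,P'_b$. The ending position of $P'_a$ is defined as follows: - if $P'_a$ is nonempty, it is the cell of its last dot; - if $P_a$ is the empty path of an unrestricted row $r$, it is a point at the right end of row $r$, strictly to the right of all its cells. $P_a>P_b$ if the ending position of $P'_a$ is in a strictly lower row than that of $P'_b$, or in the same row and strictly to the right. Otherwise $P_a<P_b$. Inversions. An inversion is a pair $(j,k)$ of labels satisfying all of the following: $j$ is a column label; $j<k$; $k$ is not the label of a dot of $P_j$; and $P_j>P_k$. $\mathrm{inv}(T)$ is the number of inversions. *)

theory Defs
  imports "HOL-Library.Disjoint_Sets"
begin

text \<open>A tableau of length n is a pair (S, F): S is the set of row labels
(labels of south steps of the boundary path, a subset of {1..n}); the column labels are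
{1..n} - S. Cell (i,j) (row label i, column label j) exists iff i < j (the south step i
comes before the west step j). F is the set of cells filled with 1. Row i' is above row i
iff i' < i; column j' is to the left of column j iff j' > j.\<close>

definition cols :: "nat \<Rightarrow> nat set \<Rightarrow> nat set" where
  "cols n S = {1..n} - S"

definition cells :: "nat \<Rightarrow> nat set \<Rightarrow> (nat \<times> nat) set" where
  "cells n S = {(i,j). i \<in> S \<and> j \<in> cols n S \<and> i < j}"

definition perm_tableau :: "nat \<Rightarrow> nat set \<times> (nat \<times> nat) set \<Rightarrow> bool" where
  "perm_tableau n T \<longleftrightarrow>
     (let S = fst T; F = snd T in
        S \<subseteq> {1..n}
      \<and> (\<forall>j\<in>cols n S. \<exists>i\<in>S. i < j)
      \<and> F \<subseteq> cells n S
      \<and> (\<forall>j\<in>cols n S. \<exists>i. (i,j) \<in> F)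
      \<and> (\<forall>i j. (i,j) \<in> cells n S \<and> (i,j) \<notin> F \<longrightarrow>
              \<not> ((\<exists>i'<i. (i',j) \<in> F) \<and> (\<exists>j'>j. (i,j') \<in> F))))"

definition top1 :: "(nat \<times> nat) set \<Rightarrow> nat \<Rightarrow> nat" where
  "top1 F j = Min {i. (i,j) \<in> F}"

definition restricted0 :: "nat \<Rightarrow> nat set \<Rightarrow> (nat \<times> nat) set \<Rightarrow> nat \<Rightarrow> nat \<Rightarrow> bool" where
  "restricted0 n S F i j \<longleftrightarrow> (i,j) \<in> cells n S \<and> (i,j) \<notin> F \<and> (\<exists>i'<i. (i',j) \<in> F)"

definition restricted_row :: "nat \<Rightarrow> nat set \<Rightarrow> (nat \<times> nat) set \<Rightarrow> nat \<Rightarrow> bool" where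
  "restricted_row n S F i \<longleftrightarrow> (\<exists>j. restricted0 n S F i j)"

text \<open>Column of the rightmost restricted 0 (the white dot) of row i.\<close>
definition wcol :: "nat \<Rightarrow> nat set \<Rightarrow> (nat \<times> nat) set \<Rightarrow> nat \<Rightarrow> nat" where
  "wcol n S F i = Min {j. restricted0 n S F i j}"

definition dotpos :: "nat \<Rightarrow> nat set \<Rightarrow> (nat \<times> nat) set \<Rightarrow> nat \<Rightarrow> nat \<times> nat" where
  "dotpos n S F k = (if k \<in> S then (k, wcol n S F k) else (top1 F k, k))"

text \<open>Alternating path, computed with a fuel argument (a path has at most n dots).\<close>
fun apath :: "nat \<Rightarrow> nat \<Rightarrow> nat set \<Rightarrow> (nat \<times> nat) set \<Rightarrow> nat \<Rightarrow> nat list" where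
  "apath 0 n S F k = []"
| "apath (Suc m) n S F k =
     (if k \<in> cols n S then
        k # (if restricted_row n S F (top1 F k) then apath m n S F (top1 F k) else [])
      else if k \<in> S \<and> restricted_row n S F k then k # apath m n S F (wcol n S F k)
      else [])"

definition altpath :: "nat \<Rightarrow> nat set \<Rightarrow> (nat \<times> nat) set \<Rightarrow> nat \<Rightarrow> nat list" where
  "altpath n S F k = apath n n S F k"

fun strip_common :: "nat list \<Rightarrow> nat list \<Rightarrow> nat list \<times> nat list" where
  "strip_common (x#xs) (y#ys) = (if x = y then strip_common xs ys else (x#xs, y#ys))"
| "strip_common xs ys = (xs, ys)"

text \<open>Ending position of P'_a (after removing the common final segment with P_b).
For the empty path of an unrestricted row a, the point right of all cells of row a is
encoded as (a, a): its horizontal coordinate a is smaller than every column label of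
that row, i.e. strictly to the right.\<close>
definition endpos :: "nat \<Rightarrow> nat set \<Rightarrow> (nat \<times> nat) set \<Rightarrow> nat \<Rightarrow> nat \<Rightarrow> nat \<times> nat" where
  "endpos n S F a b =
     (let ra = fst (strip_common (rev (altpath n S F a)) (rev (altpath n S F b)))
      in if ra = [] then (a, a) else dotpos n S F (hd ra))"

text \<open>P_a > P_b: strictly lower row (larger row label), or same row and strictly
to the right (smaller column coordinate).\<close>
definition path_gt :: "nat \<Rightarrow> nat set \<Rightarrow> (nat \<times> nat) set \<Rightarrow> nat \<Rightarrow> nat \<Rightarrow> bool" where
  "path_gt n S F a b \<longleftrightarrow>
     (let pa = endpos n S F a b; pb = endpos n S F b a
      in fst pb < fst pa \<or> (fst pa = fst pb \<and> snd pa < snd pb))"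

definition inversions :: "nat \<Rightarrow> nat set \<times> (nat \<times> nat) set \<Rightarrow> (nat \<times> nat) set" where
  "inversions n T = (let S = fst T; F = snd T in
     {(j,k). j \<in> cols n S \<and> j < k \<and> k \<le> n \<and> k \<notin> set (altpath n S F j) \<and> path_gt n S F j k})"

definition tab_inv :: "nat \<Rightarrow> nat set \<times> (nat \<times> nat) set \<Rightarrow> nat" where
  "tab_inv n T = card (inversions n T)"

end

theory Submission
  imports Defs
begin

locale ptab =
  fixes n :: nat and S :: "nat set" and F :: "(nat\<times>nat) set"
  assumes pt: "perm_tableau n (S,F)"
begin

abbreviation "C \<equiv> cols n S"
abbreviation "rr \<equiv> restricted_row n S F"
abbreviation "r0 \<equiv> restricted0 n S F"
abbreviation "tp \<equiv> top1 F"
abbreviation "wc \<equiv> wcol n S F"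
abbreviation "P \<equiv> altpath n S F"

lemma S_sub: "S \<subseteq> {1..n}" using pt by (simp add: perm_tableau_def Let_def)
lemma F_sub: "F \<subseteq> cells n S" using pt by (simp add: perm_tableau_def Let_def)
lemma col_one: "j \<in> C \<Longrightarrow> \<exists>i. (i,j) \<in> F" using pt by (simp add: perm_tableau_def Let_def)
lemma cond2: "(i,j) \<in> cells n S \<Longrightarrow> (i,j) \<notin> F \<Longrightarrow> i' < i \<Longrightarrow> (i',j) \<in> F \<Longrightarrow> j < j' \<Longrightarrow> (i,j') \<notin> F"
  using pt unfolding perm_tableau_def Let_def fst_conv snd_conv
  apply (elim conjE) apply (erule allE[of _ i], erule allE[of _ j]) by blast
lemma colsI: "j \<in> C \<longleftrightarrow> j \<in> {1..n} \<and> j \<notin> S" by (simp add: cols_def)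
lemma cellsD: "(i,j) \<in> cells n S \<Longrightarrow> i \<in> S \<and> j \<in> C \<and> i < j" by (simp add: cells_def)
lemma FD: "(i,j) \<in> F \<Longrightarrow> i \<in> S \<and> j \<in> C \<and> i < j" using F_sub cellsD by blast
lemma finF: "finite F"
proof -
  have "cells n S \<subseteq> {1..n} \<times> {1..n}" using S_sub by (auto simp: cells_def cols_def)
  then have "F \<subseteq> {1..n} \<times> {1..n}" using F_sub by blast
  then show ?thesis by (rule finite_subset) simp
qed
lemma fin_colset: "finite {i. (i,j) \<in> F}"
proof -
  have "{i. (i,j) \<in> F} \<subseteq> fst ` F" by force
  then show ?thesis using finF by (rule finite_subset[OF _ finite_imageI])
qed
lemma tp_in: "j \<in> C \<Longrightarrow> (tp j, j) \<in> F"
proof -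
  assume "j \<in> C"
  then obtain i where "(i,j) \<in> F" using col_one by blast
  then have "{i. (i,j) \<in> F} \<noteq> {}" by blast
  from Min_in[OF fin_colset this] show ?thesis by (simp add: top1_def)
qed
lemma tp_le: "(i,j) \<in> F \<Longrightarrow> tp j \<le> i"
  unfolding top1_def using Min_le[OF fin_colset] by blast
lemma tp_S: "j \<in> C \<Longrightarrow> tp j \<in> S" using tp_in FD by blast
lemma tp_lt: "j \<in> C \<Longrightarrow> tp j < j" using tp_in FD by blast
lemma r0D: "r0 i j \<Longrightarrow> i \<in> S \<and> j \<in> C \<and> i < j \<and> (i,j) \<notin> F \<and> tp j < i"
  unfolding restricted0_def using cellsD tp_le by fastforce
lemma fin_r0: "finite {j. r0 i j}"
proof -
  have "{j. r0 i j} \<subseteq> {1..n}" by (auto dest!: r0D simp: colsI)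
  then show ?thesis by (rule finite_subset) simp
qed
lemma wc_r0: "rr i \<Longrightarrow> r0 i (wc i)"
  unfolding restricted_row_def wcol_def using Min_in[OF fin_r0] by blast
lemma wc_le: "r0 i j \<Longrightarrow> wc i \<le> j"
  unfolding wcol_def using Min_le[OF fin_r0] by blast
lemma rrS: "rr i \<Longrightarrow> i \<in> S" using wc_r0 r0D by blast
lemma wc_C: "rr i \<Longrightarrow> wc i \<in> C" using wc_r0 r0D by blast
lemma tp_wc: "rr i \<Longrightarrow> tp (wc i) < i" using wc_r0 r0D by blast
lemma wc_gt: "rr i \<Longrightarrow> (i,j) \<in> F \<Longrightarrow> j < wc i"
proof -
  assume a: "rr i" "(i,j) \<in> F"
  have r: "r0 i (wc i)" using a wc_r0 by blast
  then obtain i' where i': "i' < i" "(i', wc i) \<in> F" by (auto simp: restricted0_def)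
  have c: "(i, wc i) \<in> cells n S" "(i, wc i) \<notin> F" using r by (auto simp: restricted0_def)
  show ?thesis
  proof (rule ccontr)
    assume "\<not> j < wc i"
    moreover have "j \<noteq> wc i" using a c by auto
    ultimately have "wc i < j" by simp
    then show False using cond2[OF c i'] a by blast
  qed
qed

lemma CS_disj: "j \<in> C \<Longrightarrow> j \<notin> S" by (simp add: cols_def)

definition q :: "nat \<Rightarrow> nat" where
  "q j = card {c\<in>C. j \<le> c} + card {r\<in>S. r < tp j}"

lemma finC: "finite C" by (simp add: cols_def)
lemma finS: "finite S" using S_sub finite_subset by blast
lemma cardCS: "card C + card S = n"
proof -
  have "C \<union> S = {1..n}" using S_sub by (auto simp: cols_def)
  moreover have "C \<inter> S = {}" by (auto simp: cols_def)
  ultimately show ?thesis using card_Un_disjoint[OF finC finS] by simp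
qed

lemma q_pos: "j \<in> C \<Longrightarrow> 1 \<le> q j"
proof -
  assume "j \<in> C"
  then have "{c\<in>C. j \<le> c} \<noteq> {}" by blast
  then have "card {c\<in>C. j \<le> c} > 0" using finC by (simp add: card_gt_0_iff)
  then show ?thesis by (simp add: q_def)
qed
lemma q_le: "q j \<le> n"
proof -
  have "card {c\<in>C. j \<le> c} \<le> card C" using finC by (intro card_mono) auto
  moreover have "card {r\<in>S. r < tp j} \<le> card S" using finS by (intro card_mono) auto
  ultimately show ?thesis using cardCS by (simp add: q_def)
qed
lemma q_step: "j \<in> C \<Longrightarrow> rr (tp j) \<Longrightarrow> q (wc (tp j)) + 2 \<le> q j"
proof -
  assume j: "j \<in> C" and r: "rr (tp j)"
  define w where "w = wc (tp j)"
  have jw: "j < w" unfolding w_def using wc_gt[OF r tp_in[OF j]] .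
  have wC: "w \<in> C" unfolding w_def using wc_C[OF r] .
  have tw: "tp w < tp j" unfolding w_def using tp_wc[OF r] .
  have a: "insert j {c\<in>C. w \<le> c} \<subseteq> {c\<in>C. j \<le> c}" using j jw by auto
  have "card (insert j {c\<in>C. w \<le> c}) = Suc (card {c\<in>C. w \<le> c})"
    using jw finC by (intro card_insert_disjoint) auto
  then have a': "Suc (card {c\<in>C. w \<le> c}) \<le> card {c\<in>C. j \<le> c}"
    using card_mono[OF _ a] finC by simp
  have b: "insert (tp w) {r\<in>S. r < tp w} \<subseteq> {r\<in>S. r < tp j}" using tw tp_S[OF wC] by auto
  have "card (insert (tp w) {r\<in>S. r < tp w}) = Suc (card {r\<in>S. r < tp w})"
    using finS by (intro card_insert_disjoint) auto
  then have b': "Suc (card {r\<in>S. r < tp w}) \<le> card {r\<in>S. r < tp j}"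
    using card_mono[OF _ b] finS by simp
  show ?thesis using a' b' unfolding q_def w_def by simp
qed
lemma q_row: "rr i \<Longrightarrow> q (wc i) + 2 \<le> n"
proof -
  assume r: "rr i"
  define w where "w = wc i"
  have wC: "w \<in> C" unfolding w_def using wc_C[OF r] .
  have tw: "tp w < i" unfolding w_def using tp_wc[OF r] .
  have iS: "i \<in> S" using rrS[OF r] .
  have "card {c\<in>C. w \<le> c} \<le> card C" using finC by (intro card_mono) auto
  moreover
  have b: "insert i (insert (tp w) {r\<in>S. r < tp w}) \<subseteq> S" using tp_S[OF wC] iS by auto
  have "card (insert i (insert (tp w) {r\<in>S. r < tp w})) = Suc (Suc (card {r\<in>S. r < tp w}))"
    using finS tw by (subst card_insert_disjoint; auto)+
  then have "Suc (Suc (card {r\<in>S. r < tp w})) \<le> card S"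
    using card_mono[OF finS b] by simp
  ultimately show ?thesis using cardCS unfolding q_def w_def by simp
qed

definition Bd :: "nat \<Rightarrow> nat" where
  "Bd k = (if k \<in> C then q k else if rr k then Suc (q (wc k)) else 0)"

lemma fuel: "Bd k \<le> m \<Longrightarrow> apath m n S F k = apath (Suc m) n S F k"
proof (induction m arbitrary: k)
  case 0
  have "k \<notin> C"
  proof
    assume "k \<in> C" then have "1 \<le> Bd k" using q_pos by (simp add: Bd_def)
    then show False using 0 by simp
  qed
  moreover have "\<not> rr k" using 0 \<open>k \<notin> C\<close> by (simp add: Bd_def split: if_splits)
  ultimately show ?case by simp
next
  case (Suc m)
  show ?case
  proof (cases "k \<in> C")
    case True
    show ?thesis
    proof (cases "rr (tp k)")
      case True
      have tC: "tp k \<notin> C" using tp_S[OF \<open>k\<in>C\<close>] CS_disj by blast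
      have "Bd k = q k" using \<open>k\<in>C\<close> by (simp add: Bd_def)
      moreover have "Bd (tp k) = Suc (q (wc (tp k)))" using tC True by (simp add: Bd_def)
      ultimately have "Bd (tp k) \<le> m" using Suc.prems q_step[OF \<open>k\<in>C\<close> True] by linarith
      then show ?thesis using Suc.IH \<open>k\<in>C\<close> True by simp
    next
      case False then show ?thesis using \<open>k\<in>C\<close> by simp
    qed
  next
    case False
    show ?thesis
    proof (cases "k \<in> S \<and> rr k")
      case True
      then have "Bd (wc k) \<le> m" using Suc.prems False wc_C[of k] by (auto simp: Bd_def)
      then show ?thesis using Suc.IH False True by simp
    next
      case F2: False
      have "\<And>m'. apath (Suc m') n S F k = []" using False F2 by simp
      then show ?thesis by metis
    qed
  qed
qed

lemma fuel_add: "Bd k \<le> m \<Longrightarrow> apath (m + d) n S F k = apath m n S F k"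
proof (induction d)
  case (Suc d)
  have "apath (m + Suc d) n S F k = apath (Suc (m + d)) n S F k" by simp
  also have "\<dots> = apath (m + d) n S F k" using fuel[of k "m+d"] Suc.prems by simp
  finally show ?case using Suc by simp
qed simp

lemma fuel_eq: "Bd k \<le> m \<Longrightarrow> m \<le> m' \<Longrightarrow> apath m' n S F k = apath m n S F k"
  using fuel_add[of k m "m' - m"] by simp

lemma P_col: "j \<in> C \<Longrightarrow> P j = j # (if rr (tp j) then P (tp j) else [])"
proof -
  assume j: "j \<in> C"
  then obtain n' where n': "n = Suc n'" using colsI by (cases n) auto
  have "P j = apath (Suc n') n S F j" by (simp add: altpath_def n')
  also have "\<dots> = j # (if rr (tp j) then apath n' n S F (tp j) else [])" using j by simp
  also have "\<dots> = j # (if rr (tp j) then P (tp j) else [])"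
  proof (cases "rr (tp j)")
    case True
    have "tp j \<notin> C" using tp_S[OF j] CS_disj by blast
    then have "Bd (tp j) = Suc (q (wc (tp j)))" using True by (simp add: Bd_def)
    then have "Bd (tp j) \<le> n'" using q_step[OF j True] q_le[of j] n' by linarith
    then show ?thesis using fuel_eq[of "tp j" n' n] n' by (simp add: altpath_def)
  qed simp
  finally show ?thesis .
qed

lemma P_row: "k \<notin> C \<Longrightarrow> P k = (if rr k then k # P (wc k) else [])"
proof (cases "rr k")
  case True
  assume k: "k \<notin> C"
  have kS: "k \<in> S" using rrS[OF True] .
  have "q (wc k) + 2 \<le> n" using q_row[OF True] .
  then obtain n' where n': "n = Suc n'" by (cases n) auto
  have "P k = apath (Suc n') n S F k" by (simp add: altpath_def n')
  also have "\<dots> = k # apath n' n S F (wc k)" using k kS True by simp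
  also have "\<dots> = k # P (wc k)"
  proof -
    have "Bd (wc k) = q (wc k)" using wc_C[OF True] by (simp add: Bd_def)
    then have "Bd (wc k) \<le> n'" using q_row[OF True] n' by linarith
    then show ?thesis using fuel_eq[of "wc k" n' n] n' by (simp add: altpath_def)
  qed
  finally show ?thesis using True by simp
next
  case False
  assume k: "k \<notin> C"
  then show ?thesis using False by (cases n) (simp_all add: altpath_def)
qed

definition mu :: "nat \<Rightarrow> nat" where
  "mu k = (if k \<in> C then 2 * tp k + 2 else 2 * k + 1)"

lemma mu_col: "j \<in> C \<Longrightarrow> mu (tp j) < mu j"
  using tp_S CS_disj by (auto simp: mu_def dest: CS_disj)
lemma mu_row: "rr k \<Longrightarrow> mu (wc k) < mu k"
  using wc_C tp_wc rrS CS_disj by (fastforce simp: mu_def)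

lemma mu_induct: "(\<And>k. (\<And>k'. mu k' < mu k \<Longrightarrow> Q k') \<Longrightarrow> Q k) \<Longrightarrow> Q k"
  by (rule measure_induct_rule[of mu]) blast

lemma P_ne_col: "j \<in> C \<Longrightarrow> P j \<noteq> []" using P_col by simp

lemma P_last: "P k \<noteq> [] \<Longrightarrow> last (P k) \<in> C \<and> \<not> rr (tp (last (P k)))"
proof (induction k rule: mu_induct)
  case (1 k)
  show ?case
  proof (cases "k \<in> C")
    case True
    show ?thesis
    proof (cases "rr (tp k)")
      case r: True
      have tC: "tp k \<notin> C" using tp_S[OF True] CS_disj by blast
      have "P (tp k) \<noteq> []" using P_row[OF tC] r by simp
      then show ?thesis using 1(1)[OF mu_col[OF True]] P_col[OF True] r by simp
    next
      case False then show ?thesis using P_col[OF True] True by simp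
    qed
  next
    case False
    then have r: "rr k" using 1(2) P_row[OF False] by (cases "rr k") auto
    have "P (wc k) \<noteq> []" using P_ne_col wc_C[OF r] by blast
    then show ?thesis using 1(1)[OF mu_row[OF r]] P_row[OF False] r by simp
  qed
qed

lemma P_set: "x \<in> set (P k) \<Longrightarrow> x \<in> C \<or> rr x"
proof (induction k rule: mu_induct)
  case (1 k)
  show ?case
  proof (cases "k \<in> C")
    case True
    then show ?thesis using 1 P_col[OF True] mu_col[OF True] by (auto split: if_splits)
  next
    case False
    then show ?thesis using 1 P_row[OF False] mu_row by (auto split: if_splits)
  qed
qed

definition rho :: "nat \<Rightarrow> nat" where "rho k = (if k \<in> C then tp k else k)"

lemma P_endrow: "P k \<noteq> [] \<Longrightarrow> tp (last (P k)) \<le> rho k"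
proof (induction k rule: mu_induct)
  case (1 k)
  show ?case
  proof (cases "k \<in> C")
    case True
    show ?thesis
    proof (cases "rr (tp k)")
      case r: True
      have tC: "tp k \<notin> C" using tp_S[OF True] CS_disj by blast
      have "P (tp k) \<noteq> []" using P_row[OF tC] r by simp
      then have "tp (last (P (tp k))) \<le> tp k" using 1(1)[OF mu_col[OF True]] tC by (simp add: rho_def)
      then show ?thesis using P_col[OF True] r True \<open>P (tp k) \<noteq> []\<close> by (simp add: rho_def)
    next
      case False then show ?thesis using P_col[OF True] True by (simp add: rho_def)
    qed
  next
    case False
    then have r: "rr k" using 1(2) P_row[OF False] by (cases "rr k") auto
    have wC: "wc k \<in> C" using wc_C[OF r] .
    have "P (wc k) \<noteq> []" using P_ne_col wC by blast
    then have "tp (last (P (wc k))) \<le> tp (wc k)" using 1(1)[OF mu_row[OF r]] wC by (simp add: rho_def)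
    then show ?thesis using P_row[OF False] r tp_wc[OF r] \<open>P (wc k) \<noteq> []\<close> False by (simp add: rho_def)
  qed
qed

lemma P_endrow_col: "j \<in> C \<Longrightarrow> tp (last (P j)) < j"
  using P_endrow[OF P_ne_col] tp_lt by (fastforce simp: rho_def)

lemma P_le_n: "x \<in> set (P k) \<Longrightarrow> x \<le> n"
  using P_set rrS S_sub colsI by fastforce

end

definition free :: "nat \<Rightarrow> nat set \<times> (nat\<times>nat) set \<Rightarrow> nat set" where
  "free n T = {r \<in> fst T. \<not> restricted_row n (fst T) (snd T) r \<and> (\<forall>c\<in>cols n (fst T). top1 (snd T) c \<noteq> r)}"

lemma perm_tableauI:
  assumes "S \<subseteq> {1..n}" "\<And>j. j \<in> cols n S \<Longrightarrow> \<exists>i\<in>S. i < j" "F \<subseteq> cells n S"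
    "\<And>j. j\<in>cols n S \<Longrightarrow> \<exists>i. (i,j) \<in> F"
    "\<And>i j i' j'. (i,j) \<in> cells n S \<Longrightarrow> (i,j) \<notin> F \<Longrightarrow> i' < i \<Longrightarrow> (i',j) \<in> F \<Longrightarrow> j < j' \<Longrightarrow> (i,j') \<in> F \<Longrightarrow> False"
  shows "perm_tableau n (S,F)"
  using assms unfolding perm_tableau_def Let_def by (simp, blast)

context ptab begin
lemma col_row: "j \<in> C \<Longrightarrow> \<exists>i\<in>S. i < j" using pt by (simp add: perm_tableau_def Let_def)
lemma r0_left: "r0 i j \<Longrightarrow> (i,j') \<in> F \<Longrightarrow> j' < j"
proof -
  assume r: "r0 i j" and f: "(i,j') \<in> F"
  then obtain i' where "i' < i" "(i',j) \<in> F" by (auto simp: restricted0_def)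
  moreover have "(i,j) \<in> cells n S" "(i,j) \<notin> F" using r by (auto simp: restricted0_def)
  ultimately have "\<not> j < j'" using cond2 f by blast
  moreover have "j \<noteq> j'" using r f by (auto simp: restricted0_def)
  ultimately show ?thesis by simp
qed
lemma dotpos_col: "x \<in> C \<Longrightarrow> dotpos n S F x = (tp x, x)" by (simp add: dotpos_def CS_disj)
lemma dotpos_row: "x \<in> S \<Longrightarrow> dotpos n S F x = (x, wc x)" by (simp add: dotpos_def)
end

definition EP :: "(nat \<Rightarrow> nat\<times>nat) \<Rightarrow> nat \<Rightarrow> nat list \<Rightarrow> nat list \<Rightarrow> nat\<times>nat" where
  "EP D a pa pb = (let ra = fst (strip_common (rev pa) (rev pb)) in if ra = [] then (a,a) else D (hd ra))"

definition GT :: "(nat \<Rightarrow> nat\<times>nat) \<Rightarrow> nat \<Rightarrow> nat \<Rightarrow> nat list \<Rightarrow> nat list \<Rightarrow> bool" where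
  "GT D a b pa pb = (let x = EP D a pa pb; y = EP D b pb pa in fst y < fst x \<or> (fst x = fst y \<and> snd x < snd y))"

lemma path_gt_GT: "path_gt n S F a b = GT (dotpos n S F) a b (altpath n S F a) (altpath n S F b)"
  by (simp add: path_gt_def GT_def EP_def endpos_def)

lemma sc_nil_r[simp]: "strip_common xs [] = (xs, [])" by (cases xs) auto
lemma sc_app: "strip_common (us @ xs) (us @ ys) = strip_common xs ys" by (induction us) auto
lemma sc_set1: "set (fst (strip_common xs ys)) \<subseteq> set xs"
  by (induction xs ys rule: strip_common.induct) auto
lemma sc_swap: "strip_common ys xs = (snd (strip_common xs ys), fst (strip_common xs ys))"
  by (induction xs ys rule: strip_common.induct) auto

lemma GT_app: "GT D a b (pa @ zs) (pb @ zs) = GT D a b pa pb"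
  by (simp add: GT_def EP_def sc_app)

lemma EP_cong: "(\<And>x. x \<in> set pa \<Longrightarrow> D1 x = D2 x) \<Longrightarrow> EP D1 a pa pb = EP D2 a pa pb"
proof -
  assume h: "\<And>x. x \<in> set pa \<Longrightarrow> D1 x = D2 x"
  let ?ra = "fst (strip_common (rev pa) (rev pb))"
  show ?thesis
  proof (cases "?ra = []")
    case False
    then have "hd ?ra \<in> set pa" using sc_set1[of "rev pa" "rev pb"] hd_in_set by fastforce
    then show ?thesis using h by (simp add: EP_def Let_def)
  qed (simp add: EP_def Let_def)
qed

lemma GT_cong: "(\<And>x. x \<in> set pa \<union> set pb \<Longrightarrow> D1 x = D2 x) \<Longrightarrow> GT D1 a b pa pb = GT D2 a b pa pb"
  unfolding GT_def using EP_cong[of pa D1 D2] EP_cong[of pb D1 D2] by (metis Un_iff)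

lemma GT_diff:
  assumes "pa \<noteq> []" "pb \<noteq> []" "last pa \<noteq> last pb"
  shows "GT D a b pa pb \<longleftrightarrow> fst (D (last pb)) < fst (D (last pa)) \<or>
     (fst (D (last pa)) = fst (D (last pb)) \<and> snd (D (last pa)) < snd (D (last pb)))"
proof -
  obtain xa ya where a: "rev pa = xa # ya" using assms(1) by (cases "rev pa") auto
  obtain xb yb where b: "rev pb = xb # yb" using assms(2) by (cases "rev pb") auto
  have "last pa = xa" using a by (metis last_rev list.sel(1) rev_rev_ident hd_rev assms(1) rev_is_Nil_conv)
  moreover have "last pb = xb" using b by (metis last_rev list.sel(1) rev_rev_ident hd_rev assms(2) rev_is_Nil_conv)
  ultimately show ?thesis using assms(3) a b by (simp add: GT_def EP_def Let_def)
qed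

lemma GT_nil_r:
  assumes "pa \<noteq> []"
  shows "GT D a b pa [] \<longleftrightarrow> b < fst (D (last pa)) \<or> (fst (D (last pa)) = b \<and> snd (D (last pa)) < b)"
proof -
  obtain xa ya where a: "rev pa = xa # ya" using assms(1) by (cases "rev pa") auto
  have "last pa = xa" using a by (metis last_rev list.sel(1) rev_rev_ident hd_rev assms(1) rev_is_Nil_conv)
  then show ?thesis using a by (simp add: GT_def EP_def Let_def)
qed

lemma GT_nil_l:
  assumes "pb \<noteq> []"
  shows "GT D a b [] pb \<longleftrightarrow> fst (D (last pb)) < a \<or> (a = fst (D (last pb)) \<and> a < snd (D (last pb)))"
proof -
  obtain xb yb where b: "rev pb = xb # yb" using assms(1) by (cases "rev pb") auto
  have "last pb = xb" using b by (metis last_rev list.sel(1) rev_rev_ident hd_rev assms(1) rev_is_Nil_conv)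
  then show ?thesis using b by (simp add: GT_def EP_def Let_def)
qed


section \<open>Adding a leftmost column\<close>

locale addc = ptab n S F' for n S F' +
  fixes X :: "nat set"
  assumes Xfree: "X \<subseteq> free n (S,F')" and Xne: "X \<noteq> {}"
begin

definition "N = Suc n"
definition "FF = F' \<union> (\<lambda>i. (i, Suc n)) ` X"
definition "m = Min X"

lemma XS: "X \<subseteq> S" using Xfree by (auto simp: free_def)
lemma finX: "finite X" using XS finS finite_subset by blast
lemma mX: "m \<in> X" using Min_in[OF finX Xne] by (simp add: m_def)
lemma m_le: "x \<in> X \<Longrightarrow> m \<le> x" using Min_le[OF finX] by (simp add: m_def)
lemma X_nrr: "x \<in> X \<Longrightarrow> \<not> rr x" using Xfree by (auto simp: free_def)
lemma X_ntp: "x \<in> X \<Longrightarrow> c \<in> C \<Longrightarrow> tp c \<noteq> x" using Xfree by (auto simp: free_def)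
lemma NS: "Suc n \<notin> S" using S_sub by auto
lemma S_le: "i \<in> S \<Longrightarrow> i \<le> n" using S_sub by auto
lemma C_le: "j \<in> C \<Longrightarrow> j \<le> n" by (simp add: cols_def)
lemma C_neq: "j \<in> C \<Longrightarrow> j \<noteq> Suc n" using C_le by fastforce
lemma S_neq: "i \<in> S \<Longrightarrow> i \<noteq> Suc n" using NS by metis
lemma S_lt: "i \<in> S \<Longrightarrow> i < Suc n" using S_le by (simp add: less_Suc_eq_le)
lemma F'_le: "(i,j) \<in> F' \<Longrightarrow> j \<le> n" using FD C_le by blast

lemma colsT: "cols (Suc n) S = insert (Suc n) C" using NS by (auto simp: cols_def)
lemma cellsT: "cells (Suc n) S = cells n S \<union> {(i, Suc n) | i. i \<in> S}"
  using colsT S_lt by (auto simp: cells_def cols_def)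
lemma FF_iff: "(i,j) \<in> FF \<longleftrightarrow> (i,j) \<in> F' \<or> (j = Suc n \<and> i \<in> X)"
  by (auto simp: FF_def)
lemma FF_old: "j \<noteq> Suc n \<Longrightarrow> (i,j) \<in> FF \<longleftrightarrow> (i,j) \<in> F'" using FF_iff by auto
lemma FF_new: "(i, Suc n) \<in> FF \<longleftrightarrow> i \<in> X" using FF_iff F'_le by fastforce

lemma ptT: "perm_tableau (Suc n) (S, FF)"
proof (rule perm_tableauI)
  show "S \<subseteq> {1..Suc n}" using S_sub by auto
  show "\<exists>i\<in>S. i < j" if "j \<in> cols (Suc n) S" for j
  proof (cases "j = Suc n")
    case True then show ?thesis using mX XS S_lt by (intro bexI[of _ m]) auto
  next
    case False then show ?thesis using that colsT col_row by auto
  qed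
  show "FF \<subseteq> cells (Suc n) S" using F_sub XS S_le by (auto simp: FF_def cellsT)
  show "\<exists>i. (i,j) \<in> FF" if "j \<in> cols (Suc n) S" for j
  proof (cases "j = Suc n")
    case True then show ?thesis using mX FF_new by blast
  next
    case False
    then have "j \<in> C" using that colsT by blast
    then obtain i where "(i,j) \<in> F'" using col_one by blast
    then show ?thesis using FF_iff by blast
  qed
  show False if a: "(i,j) \<in> cells (Suc n) S" "(i,j) \<notin> FF" "i' < i" "(i',j) \<in> FF" "j < j'" "(i,j') \<in> FF" for i j i' j'
  proof -
    have jn: "j \<noteq> Suc n" using a(5,6) FF_iff F'_le by fastforce
    then have c: "(i,j) \<in> cells n S" "(i,j) \<notin> F'" "(i',j) \<in> F'" using a cellsT FF_old by auto
    show False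
    proof (cases "j' = Suc n")
      case True
      then have "i \<in> X" using a(6) FF_new by simp
      moreover have "r0 i j" using c a(3) by (auto simp: restricted0_def)
      ultimately show False using X_nrr by (auto simp: restricted_row_def)
    next
      case False then show False using cond2[OF c(1,2) a(3) c(3) a(5)] a(6) FF_old by auto
    qed
  qed
qed

sublocale T: ptab "Suc n" S FF using ptT by unfold_locales

lemma tpT_old: "j \<noteq> Suc n \<Longrightarrow> top1 FF j = tp j"
  unfolding top1_def using FF_old by simp
lemma tpT_new: "top1 FF (Suc n) = m"
proof -
  have "{i. (i, Suc n) \<in> FF} = X" using FF_new by auto
  then show ?thesis by (simp add: top1_def m_def)
qed

lemma r0T: "restricted0 (Suc n) S FF i j \<longleftrightarrow> (j \<noteq> Suc n \<and> r0 i j) \<or> (j = Suc n \<and> i \<in> S \<and> i \<notin> X \<and> m < i)"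
proof (cases "j = Suc n")
  case True
  have "(\<exists>i'<i. i' \<in> X) \<longleftrightarrow> m < i" using mX m_le by (meson le_less_trans)
  then show ?thesis using True S_lt by (auto simp: restricted0_def cellsT FF_new cells_def colsT)
next
  case False
  then show ?thesis using FF_old by (auto simp: restricted0_def cellsT)
qed

lemma rrT: "restricted_row (Suc n) S FF i \<longleftrightarrow> rr i \<or> (i \<in> S \<and> i \<notin> X \<and> m < i)"
proof
  assume "restricted_row (Suc n) S FF i"
  then obtain j where "restricted0 (Suc n) S FF i j" by (auto simp: restricted_row_def)
  then show "rr i \<or> (i \<in> S \<and> i \<notin> X \<and> m < i)" using r0T by (auto simp: restricted_row_def)
next
  assume "rr i \<or> (i \<in> S \<and> i \<notin> X \<and> m < i)"
  then show "restricted_row (Suc n) S FF i"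
  proof
    assume "rr i"
    then obtain j where "r0 i j" by (auto simp: restricted_row_def)
    moreover have "j \<noteq> Suc n" using calculation r0D C_le by fastforce
    ultimately show ?thesis using r0T by (auto simp: restricted_row_def)
  next
    assume "i \<in> S \<and> i \<notin> X \<and> m < i"
    then show ?thesis using r0T by (auto simp: restricted_row_def)
  qed
qed

lemma wcT_old: "rr i \<Longrightarrow> wcol (Suc n) S FF i = wc i"
proof -
  assume r: "rr i"
  have w: "r0 i (wc i)" using wc_r0[OF r] .
  have wn: "wc i \<noteq> Suc n" using wc_C[OF r] C_le by fastforce
  have "restricted0 (Suc n) S FF i (wc i)" using r0T w wn by simp
  then have le: "wcol (Suc n) S FF i \<le> wc i" by (rule T.wc_le)
  have rT: "restricted_row (Suc n) S FF i" using rrT r by simp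
  have "restricted0 (Suc n) S FF i (wcol (Suc n) S FF i)" using T.wc_r0[OF rT] .
  then have "(wcol (Suc n) S FF i \<noteq> Suc n \<and> r0 i (wcol (Suc n) S FF i)) \<or> wcol (Suc n) S FF i = Suc n"
    using r0T by blast
  then show ?thesis
  proof
    assume "wcol (Suc n) S FF i \<noteq> Suc n \<and> r0 i (wcol (Suc n) S FF i)"
    then have "wc i \<le> wcol (Suc n) S FF i" using wc_le by blast
    then show ?thesis using le by simp
  next
    assume "wcol (Suc n) S FF i = Suc n" then show ?thesis using le wc_C[OF r] C_le by fastforce
  qed
qed

lemma wcT_new: "\<not> rr i \<Longrightarrow> i \<in> S \<Longrightarrow> i \<notin> X \<Longrightarrow> m < i \<Longrightarrow> wcol (Suc n) S FF i = Suc n"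
proof -
  assume a: "\<not> rr i" "i \<in> S" "i \<notin> X" "m < i"
  have rT: "restricted_row (Suc n) S FF i" using rrT a by simp
  have "restricted0 (Suc n) S FF i (wcol (Suc n) S FF i)" using T.wc_r0[OF rT] .
  then show ?thesis using r0T a(1) by (auto simp: restricted_row_def)
qed

abbreviation "PT \<equiv> altpath (Suc n) S FF"

definition er :: "nat \<Rightarrow> nat" where
  "er k = (if P k = [] then k else tp (last (P k)))"
definition ext :: "nat \<Rightarrow> nat list" where
  "ext k = (if er k \<in> S \<and> er k \<notin> X \<and> m < er k then [er k, Suc n] else [])"

lemma PT_N: "PT (Suc n) = [Suc n]"
proof -
  have "Suc n \<in> cols (Suc n) S" using colsT by simp
  moreover have "\<not> restricted_row (Suc n) S FF m" using rrT mX X_nrr by simp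
  ultimately show ?thesis using T.P_col tpT_new by simp
qed

lemma PT_eq: "k \<noteq> Suc n \<Longrightarrow> PT k = P k @ ext k"
proof (induction k rule: mu_induct)
  case (1 k)
  show ?case
  proof (cases "k \<in> C")
    case kC: True
    have kT: "k \<in> cols (Suc n) S" using kC colsT by simp
    have tk: "top1 FF k = tp k" using tpT_old 1(2) by simp
    have tS: "tp k \<in> S" using tp_S[OF kC] .
    have tC: "tp k \<notin> C" using tS CS_disj by blast
    show ?thesis
    proof (cases "rr (tp k)")
      case True
      have rT: "restricted_row (Suc n) S FF (tp k)" using rrT True by simp
      have ne: "P (tp k) \<noteq> []" using P_row[OF tC] True by simp
      have "tp k \<noteq> Suc n" by (rule S_neq[OF tS])
      then have "PT (tp k) = P (tp k) @ ext (tp k)" using 1(1)[OF mu_col[OF kC]] by blast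
      moreover have "ext (tp k) = ext k" using P_col[OF kC] True ne by (simp add: ext_def er_def)
      ultimately show ?thesis using T.P_col[OF kT] tk rT P_col[OF kC] True by simp
    next
      case False
      have er: "er k = tp k" using P_col[OF kC] False by (simp add: er_def)
      show ?thesis
      proof (cases "tp k \<notin> X \<and> m < tp k")
        case True
        have rT: "restricted_row (Suc n) S FF (tp k)" using rrT True tS by simp
        have "PT (tp k) = [tp k, Suc n]"
        proof -
          have "tp k \<notin> cols (Suc n) S" using colsT tC S_neq[OF tS] by blast
          then show ?thesis using T.P_row[of "tp k"] rT wcT_new[OF False tS] True PT_N by simp
        qed
        then show ?thesis using T.P_col[OF kT] tk rT P_col[OF kC] False er tS True by (simp add: ext_def)
      next
        case F2: False
        have rT: "\<not> restricted_row (Suc n) S FF (tp k)" using rrT F2 False by simp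
        show ?thesis using T.P_col[OF kT] tk rT P_col[OF kC] False er F2 by (simp add: ext_def)
      qed
    qed
  next
    case kC: False
    have kT: "k \<notin> cols (Suc n) S" using kC colsT 1(2) by simp
    show ?thesis
    proof (cases "rr k")
      case True
      have rT: "restricted_row (Suc n) S FF k" using rrT True by simp
      have wC: "wc k \<in> C" using wc_C[OF True] .
      have ne: "P (wc k) \<noteq> []" using P_ne_col[OF wC] .
      have "PT (wc k) = P (wc k) @ ext (wc k)" using 1(1)[OF mu_row[OF True]] wC C_le by fastforce
      moreover have "ext (wc k) = ext k" using P_row[OF kC] True ne by (simp add: ext_def er_def)
      ultimately show ?thesis using T.P_row[OF kT] rT wcT_old[OF True] P_row[OF kC] True by simp
    next
      case False
      have er: "er k = k" using P_row[OF kC] False by (simp add: er_def)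
      show ?thesis
      proof (cases "k \<in> S \<and> k \<notin> X \<and> m < k")
        case True
        have rT: "restricted_row (Suc n) S FF k" using rrT True by simp
        show ?thesis using T.P_row[OF kT] rT wcT_new[OF False] True PT_N P_row[OF kC] False er
          by (simp add: ext_def)
      next
        case F2: False
        have rT: "\<not> restricted_row (Suc n) S FF k" using rrT F2 False by simp
        show ?thesis using T.P_row[OF kT] rT P_row[OF kC] False er F2 by (simp add: ext_def)
      qed
    qed
  qed
qed


lemma er_ne: "P k \<noteq> [] \<Longrightarrow> last (P k) \<in> C \<and> er k = tp (last (P k)) \<and> er k \<in> S \<and> er k \<notin> X \<and> \<not> rr (er k)"
  using P_last[of k] tp_S X_ntp by (auto simp: er_def)
lemma er_nil: "P k = [] \<Longrightarrow> er k = k" by (simp add: er_def)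
lemma er_col: "j \<in> C \<Longrightarrow> er j < j" using P_endrow_col P_ne_col by (simp add: er_def)
lemma ext_cases: "ext k = [] \<or> (ext k = [er k, Suc n] \<and> er k \<in> S \<and> er k \<notin> X \<and> m < er k)"
  by (simp add: ext_def)
lemma ext_nil: "ext k = [] \<Longrightarrow> er k \<in> S \<Longrightarrow> er k \<notin> X \<Longrightarrow> er k < m"
  using mX by (simp add: ext_def split: if_splits) (metis linorder_neqE_nat)
lemma er_nrr: "er k \<in> S \<Longrightarrow> \<not> rr (er k)"
proof (cases "P k = []")
  case True
  assume "er k \<in> S"
  then have "k \<notin> C" using True P_ne_col er_nil CS_disj by metis
  then show ?thesis using True P_row[of k] er_nil[OF True] by (auto split: if_splits)
next
  case False then show ?thesis using er_ne by blast
qed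

abbreviation "DT \<equiv> dotpos (Suc n) S FF"
abbreviation "D' \<equiv> dotpos n S F'"

lemma D_col: "x \<in> C \<Longrightarrow> DT x = (tp x, x) \<and> D' x = (tp x, x)"
  using dotpos_col T.dotpos_col[of x] colsT tpT_old C_neq by auto
lemma D_N: "DT (Suc n) = (m, Suc n)"
  using T.dotpos_col[of "Suc n"] colsT tpT_new by simp
lemma D_new: "e \<in> S \<Longrightarrow> \<not> rr e \<Longrightarrow> e \<notin> X \<Longrightarrow> m < e \<Longrightarrow> DT e = (e, Suc n)"
  using T.dotpos_row wcT_new by simp
lemma D_agree: "x \<in> set (P k) \<Longrightarrow> DT x = D' x"
proof -
  assume "x \<in> set (P k)"
  then have "x \<in> C \<or> rr x" using P_set by blast
  then show ?thesis
  proof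
    assume "x \<in> C" then show ?thesis using D_col by simp
  next
    assume r: "rr x"
    then have "x \<in> S" using rrS by blast
    then show ?thesis using dotpos_row T.dotpos_row wcT_old[OF r] by simp
  qed
qed

lemma P_le: "x \<in> set (P k) \<Longrightarrow> x \<noteq> Suc n" using P_le_n by fastforce

lemma GT_main:
  assumes j: "j \<in> C" and jk: "j < k" and kn: "k \<le> n"
  shows "GT DT j k (P j @ ext j) (P k @ ext k) \<longleftrightarrow> GT D' j k (P j) (P k)"
proof -
  define pj where "pj = P j"
  define qk where "qk = P k"
  have pj: "pj \<noteq> []" using P_ne_col[OF j] by (simp add: pj_def)
  define cj where "cj = last pj"
  have fj: "cj \<in> C" "er j = tp cj" "er j \<in> S" "er j \<notin> X" "\<not> rr (er j)"
    using er_ne[of j] pj by (auto simp: cj_def pj_def)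
  have ejj: "er j < j" using er_col[OF j] .
  have cong: "GT DT j k pj qk = GT D' j k pj qk"
    by (rule GT_cong) (auto simp: pj_def qk_def intro: D_agree)
  have Dcj: "DT cj = (er j, cj)" "D' cj = (er j, cj)" using D_col[OF fj(1)] fj(2) by auto
  have cjN: "cj \<noteq> Suc n" using C_neq[OF fj(1)] .
  have kS_nil: "qk = [] \<Longrightarrow> er k = k" using er_nil by (simp add: qk_def)
  have RHS_nil: "qk = [] \<Longrightarrow> \<not> GT D' j k pj qk"
    using GT_nil_r[OF pj] Dcj ejj jk by (simp add: cj_def)
  have fk: "qk \<noteq> [] \<Longrightarrow> last qk \<in> C \<and> er k = tp (last qk) \<and> er k \<in> S \<and> er k \<notin> X"
    using er_ne[of k] unfolding qk_def by metis
  have Dck: "qk \<noteq> [] \<Longrightarrow> DT (last qk) = (er k, last qk) \<and> D' (last qk) = (er k, last qk)"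
    using fk D_col by auto
  have ckN: "qk \<noteq> [] \<Longrightarrow> last qk \<noteq> Suc n" using fk C_neq by blast
  have RHS_ne: "qk \<noteq> [] \<Longrightarrow> er j \<noteq> er k \<Longrightarrow> GT D' j k pj qk \<longleftrightarrow> er k < er j"
  proof -
    assume q: "qk \<noteq> []" and e: "er j \<noteq> er k"
    then have "cj \<noteq> last qk" using fj(2) fk by auto
    then show ?thesis using GT_diff[OF pj q, of D' j k] Dcj Dck[OF q] e by (auto simp: cj_def)
  qed
  show ?thesis
  proof (cases "ext j = []")
    case ej0: True
    have ejm: "er j < m" using ext_nil[OF ej0 fj(3,4)] .
    show ?thesis
    proof (cases "ext k = []")
      case True then show ?thesis using ej0 cong by (simp add: pj_def qk_def)
    next
      case False
      then have ek: "ext k = [er k, Suc n]" "m < er k" using ext_cases[of k] by auto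
      have "GT DT j k pj (qk @ [er k, Suc n]) \<longleftrightarrow> False"
        using GT_diff[OF pj, of "qk @ [er k, Suc n]" DT j k] D_N Dcj cjN ejm by (auto simp: cj_def)
      moreover have "\<not> GT D' j k pj qk"
      proof (cases "qk = []")
        case True then show ?thesis using RHS_nil by blast
      next
        case False then show ?thesis using RHS_ne[OF False] ejm ek by auto
      qed
      ultimately show ?thesis using ej0 ek by (simp add: pj_def qk_def)
    qed
  next
    case ej1: False
    then have ej: "ext j = [er j, Suc n]" "m < er j" using ext_cases[of j] by auto
    have DTej: "DT (er j) = (er j, Suc n)" using D_new fj(3,5,4) ej(2) by simp
    show ?thesis
    proof (cases "ext k = []")
      case ek0: True
      show ?thesis
      proof (cases "qk = []")
        case True
        have "\<not> GT DT j k (pj @ [er j, Suc n]) []" using GT_nil_r[of "pj @ [er j, Suc n]" DT j k] D_N ej ejj jk by simp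
        then show ?thesis using RHS_nil True ej ek0 by (simp add: pj_def qk_def)
      next
        case False
        have ekm: "er k < m" using ext_nil[OF ek0] fk[OF False] by blast
        have "GT DT j k (pj @ [er j, Suc n]) qk"
          using GT_diff[OF _ False, of "pj @ [er j, Suc n]" DT j k] D_N Dck[OF False] ckN[OF False] ekm by auto
        moreover have "er j \<noteq> er k" using ekm ej by simp
        ultimately show ?thesis using RHS_ne[OF False] ej ek0 ekm by (simp add: pj_def qk_def)
      qed
    next
      case False
      then have ek: "ext k = [er k, Suc n]" "m < er k" using ext_cases[of k] by auto
      show ?thesis
      proof (cases "er j = er k")
        case True
        have "GT DT j k (pj @ [er j, Suc n]) (qk @ [er k, Suc n]) = GT DT j k pj qk"
          using GT_app[of DT j k pj "[er j, Suc n]" qk] True by simp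
        then show ?thesis using cong ej ek by (simp add: pj_def qk_def)
      next
        case neq: False
        have "GT DT j k (pj @ [er j, Suc n]) (qk @ [er k, Suc n]) = GT DT j k (pj @ [er j]) (qk @ [er k])"
          using GT_app[of DT j k "pj @ [er j]" "[Suc n]" "qk @ [er k]"] by simp
        also have "\<dots> \<longleftrightarrow> er k < er j"
        proof -
          have ekS: "er k \<in> S" using ext_cases[of k] False by auto
          have "er k \<notin> X" using ext_cases[of k] False by auto
          then have "DT (er k) = (er k, Suc n)" using D_new ekS er_nrr[OF ekS] ek(2) by simp
          then show ?thesis using GT_diff[of "pj @ [er j]" "qk @ [er k]" DT j k] neq DTej by auto
        qed
        finally have L: "GT DT j k (pj @ [er j, Suc n]) (qk @ [er k, Suc n]) \<longleftrightarrow> er k < er j" .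
        show ?thesis
        proof (cases "qk = []")
          case True
          then show ?thesis using L RHS_nil kS_nil ejj jk ej ek by (simp add: pj_def qk_def)
        next
          case F2: False
          then show ?thesis using L RHS_ne[OF F2 neq] ej ek by (simp add: pj_def qk_def)
        qed
      qed
    qed
  qed
qed

lemma finite_inv: "finite (inversions n' T)"
proof -
  have "inversions n' T \<subseteq> {0..n'} \<times> {0..n'}" by (auto simp: inversions_def Let_def)
  then show ?thesis by (rule finite_subset) simp
qed

lemma inv_eq: "inversions (Suc n) (S, FF) = inversions n (S, F')"
proof (intro set_eqI iffI)
  fix x assume "x \<in> inversions (Suc n) (S, FF)"
  then obtain j k where x: "x = (j,k)" and j: "j \<in> cols (Suc n) S" and jk: "j < k" and kN: "k \<le> Suc n"
    and nin: "k \<notin> set (PT j)" and gt: "path_gt (Suc n) S FF j k"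
    by (auto simp: inversions_def Let_def)
  have jC: "j \<in> C" using j jk kN colsT by auto
  have PTj: "PT j = P j @ ext j" using PT_eq C_neq[OF jC] by blast
  show "x \<in> inversions n (S, F')"
  proof (cases "k = Suc n")
    case True
    then have e0: "ext j = []" using nin PTj ext_cases[of j] by auto
    have "er j < m" using ext_nil[OF e0] er_ne[OF P_ne_col[OF jC]] by blast
    moreover have "last (P j) \<noteq> Suc n" using P_le last_in_set P_ne_col[OF jC] by blast
    ultimately have "\<not> GT DT j (Suc n) (P j) [Suc n]"
      using GT_diff[OF P_ne_col[OF jC], of "[Suc n]" DT j "Suc n"] D_N D_col er_ne[OF P_ne_col[OF jC]]
      by auto
    then show ?thesis using gt True PTj e0 PT_N by (simp add: path_gt_GT)
  next
    case False
    then have kn: "k \<le> n" using kN by simp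
    have PTk: "PT k = P k @ ext k" using PT_eq False by blast
    have "set (ext j) \<subseteq> {er j, Suc n}" using ext_cases[of j] by auto
    moreover have "er j < k" using er_col[OF jC] jk by simp
    ultimately have nin': "k \<notin> set (P j)" using nin PTj kn by auto
    have "GT D' j k (P j) (P k)" using gt GT_main[OF jC jk kn] PTj PTk by (simp add: path_gt_GT)
    then show ?thesis using x jC jk kn nin' by (simp add: inversions_def path_gt_GT)
  qed
next
  fix x assume "x \<in> inversions n (S, F')"
  then obtain j k where x: "x = (j,k)" and jC: "j \<in> C" and jk: "j < k" and kn: "k \<le> n"
    and nin: "k \<notin> set (P j)" and gt: "path_gt n S F' j k"
    by (auto simp: inversions_def Let_def)
  have PTj: "PT j = P j @ ext j" using PT_eq C_neq[OF jC] by blast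
  have PTk: "PT k = P k @ ext k" using PT_eq kn by simp
  have "set (ext j) \<subseteq> {er j, Suc n}" using ext_cases[of j] by auto
  moreover have "er j < k" using er_col[OF jC] jk by simp
  ultimately have nin': "k \<notin> set (PT j)" using nin PTj kn by auto
  have "GT DT j k (PT j) (PT k)" using gt GT_main[OF jC jk kn] PTj PTk by (simp add: path_gt_GT)
  then show "x \<in> inversions (Suc n) (S, FF)" using x jC jk kn nin' colsT
    by (simp add: inversions_def path_gt_GT Let_def)
qed

lemma free_T: "free (Suc n) (S, FF) = {r \<in> X. m < r} \<union> {r \<in> free n (S,F'). r < m}"
proof (intro set_eqI iffI)
  fix r assume "r \<in> free (Suc n) (S, FF)"
  then have r: "r \<in> S" "\<not> restricted_row (Suc n) S FF r" "\<forall>c\<in>cols (Suc n) S. top1 FF c \<noteq> r"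
    by (auto simp: free_def)
  have nrr: "\<not> rr r" and c1: "\<not> (r \<notin> X \<and> m < r)" using r(1,2) rrT by auto
  have ntp: "\<forall>c\<in>C. tp c \<noteq> r" using r(3) colsT tpT_old C_neq by fastforce
  have rm: "r \<noteq> m" using r(3) colsT tpT_new by auto
  show "r \<in> {r \<in> X. m < r} \<union> {r \<in> free n (S,F'). r < m}"
  proof (cases "m < r")
    case True then show ?thesis using c1 by auto
  next
    case False then show ?thesis using rm r(1) nrr ntp by (auto simp: free_def)
  qed
next
  fix r assume a: "r \<in> {r \<in> X. m < r} \<union> {r \<in> free n (S,F'). r < m}"
  then have rS: "r \<in> S" and rf: "r \<in> free n (S,F')" and rm: "r \<noteq> m"
    using XS Xfree by (auto simp: free_def)
  have nrr: "\<not> rr r" and ntp: "\<forall>c\<in>C. tp c \<noteq> r" using rf by (auto simp: free_def)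
  have "\<not> restricted_row (Suc n) S FF r" using a nrr rrT by auto
  moreover have "\<forall>c\<in>cols (Suc n) S. top1 FF c \<noteq> r" using ntp rm colsT tpT_new tpT_old C_neq by auto
  ultimately show "r \<in> free (Suc n) (S, FF)" using rS by (simp add: free_def)
qed

end

context ptab begin

lemma ar_cols: "cols (Suc n) (insert (Suc n) S) = C"
  unfolding cols_def by (rule set_eqI) (simp, arith)
lemma ar_cells: "cells (Suc n) (insert (Suc n) S) = cells n S"
  unfolding cells_def ar_cols by (rule set_eqI) (auto simp: cols_def)
lemma ar_r0: "restricted0 (Suc n) (insert (Suc n) S) F = r0"
  by (intro ext) (simp add: restricted0_def ar_cells)
lemma ar_rr: "restricted_row (Suc n) (insert (Suc n) S) F = rr"
  by (intro ext) (simp add: restricted_row_def ar_r0)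
lemma ar_wc: "wcol (Suc n) (insert (Suc n) S) F = wc"
  by (intro ext) (simp add: wcol_def ar_r0)

lemma ar_pt: "perm_tableau (Suc n) (insert (Suc n) S, F)"
  using pt S_sub unfolding perm_tableau_def Let_def fst_conv snd_conv ar_cols ar_cells by auto

lemma ar_apath: "apath m (Suc n) (insert (Suc n) S) F k = apath m n S F k"
proof (induction m arbitrary: k)
  case (Suc m)
  have "(k \<in> insert (Suc n) S \<and> rr k) = (k \<in> S \<and> rr k)" using rrS by blast
  then show ?case using Suc by (simp add: ar_cols ar_rr ar_wc)
qed simp

lemma Bd_le: "Bd k \<le> n"
  unfolding Bd_def using q_le[of k] q_row[of k] by auto

lemma ar_P: "altpath (Suc n) (insert (Suc n) S) F k = P k"
  using ar_apath fuel_eq[OF Bd_le, of "Suc n"] by (simp add: altpath_def)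

lemma ar_dotpos: "x \<noteq> Suc n \<Longrightarrow> dotpos (Suc n) (insert (Suc n) S) F x = dotpos n S F x"
  by (simp add: dotpos_def ar_wc)

lemma ar_inv: "inversions (Suc n) (insert (Suc n) S, F) = inversions n (S, F)"
proof -
  have *: "(j,k) \<in> inversions (Suc n) (insert (Suc n) S, F) \<longleftrightarrow> (j,k) \<in> inversions n (S, F)" for j k
  proof -
    let ?D2 = "dotpos (Suc n) (insert (Suc n) S) F" and ?D = "dotpos n S F"
    have L: "(j,k) \<in> inversions (Suc n) (insert (Suc n) S, F) \<longleftrightarrow>
      j \<in> C \<and> j < k \<and> k \<le> Suc n \<and> k \<notin> set (P j) \<and> GT ?D2 j k (P j) (P k)"
      by (simp add: inversions_def ar_cols ar_P path_gt_GT)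
    have R: "(j,k) \<in> inversions n (S, F) \<longleftrightarrow>
      j \<in> C \<and> j < k \<and> k \<le> n \<and> k \<notin> set (P j) \<and> GT ?D j k (P j) (P k)"
      by (simp add: inversions_def path_gt_GT)
    show ?thesis
    proof (cases "j \<in> C \<and> j < k \<and> k \<le> Suc n")
      case False then show ?thesis using L R by auto
    next
      case True
      then have j: "j \<in> C" by blast
      have agree: "\<And>x. x \<in> set (P j) \<union> set (P k) \<Longrightarrow> ?D2 x = ?D x"
        using P_le_n ar_dotpos by fastforce
      have G: "GT ?D2 j k (P j) (P k) = GT ?D j k (P j) (P k)" by (rule GT_cong) (rule agree)
      show ?thesis
      proof (cases "k = Suc n")
        case kN: True
        have ne: "P j \<noteq> []" using P_ne_col[OF j] .
        have lj: "last (P j) \<in> C" using P_last[OF ne] by blast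
        have ln: "last (P j) \<noteq> Suc n" using lj by (auto simp: cols_def)
        have kC: "k \<notin> C" using kN by (simp add: cols_def)
        have "\<not> rr k" using rrS S_sub kN by fastforce
        then have Pk: "P k = []" using P_row[OF kC] by simp
        have "tp (last (P j)) < Suc n" using tp_lt[OF lj] lj by (simp add: cols_def)
        then have "\<not> GT ?D2 j k (P j) (P k)"
          using GT_nil_r[OF ne, of ?D2 j k] Pk ar_dotpos[OF ln] dotpos_col[OF lj] kN by simp
        moreover have "\<not> k \<le> n" using kN by simp
        ultimately show ?thesis using L R by blast
      next
        case False then show ?thesis using L R G True by auto
      qed
    qed
  qed
  show ?thesis
  proof (rule set_eqI)
    fix x :: "nat \<times> nat"
    obtain j k where "x = (j,k)" by (cases x)
    then show "x \<in> inversions (Suc n) (insert (Suc n) S, F) \<longleftrightarrow> x \<in> inversions n (S, F)" using * by simp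
  qed
qed

lemma ar_free: "free (Suc n) (insert (Suc n) S, F) = insert (Suc n) (free n (S, F))"
proof -
  have "\<not> rr (Suc n)" using rrS S_sub by fastforce
  moreover have "\<forall>c\<in>C. tp c \<noteq> Suc n" using tp_lt by (fastforce simp: cols_def)
  ultimately show ?thesis by (auto simp: free_def ar_cols ar_rr)
qed

end


lemma finite_inversions: "finite (inversions n' T)"
proof -
  have "inversions n' T \<subseteq> {0..n'} \<times> {0..n'}" by (auto simp: inversions_def Let_def)
  then show ?thesis by (rule finite_subset) simp
qed

lemma tab_inv0: "tab_inv n' T = 0 \<longleftrightarrow> inversions n' T = {}"
  using finite_inversions by (simp add: tab_inv_def)

context ptab begin
lemma nrr_right: "(i, j') \<in> F \<Longrightarrow> (\<And>j. r0 i j \<Longrightarrow> j \<le> j') \<Longrightarrow> \<not> rr i"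
  using r0_left by (fastforce simp: restricted_row_def)
end

definition addrow :: "nat \<Rightarrow> nat set \<times> (nat\<times>nat) set \<Rightarrow> nat set \<times> (nat\<times>nat) set" where
  "addrow n T = (insert (Suc n) (fst T), snd T)"
definition addcol :: "nat \<Rightarrow> nat set \<times> (nat\<times>nat) set \<Rightarrow> nat set \<Rightarrow> nat set \<times> (nat\<times>nat) set" where
  "addcol n T X = (fst T, snd T \<union> (\<lambda>i. (i, Suc n)) ` X)"
definition II :: "nat \<Rightarrow> (nat set \<times> (nat\<times>nat) set) set" where
  "II n = {T. perm_tableau n T \<and> tab_inv n T = 0}"

lemma dec_row:
  assumes pt: "perm_tableau (Suc n) (S,F)" and N: "Suc n \<in> S"
  shows "perm_tableau n (S - {Suc n}, F)"
proof -
  interpret T: ptab "Suc n" S F using pt by unfold_locales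
  have c: "cols n (S - {Suc n}) = cols (Suc n) S"
    unfolding cols_def using N by (intro set_eqI) (auto simp: le_Suc_eq)
  have ce: "cells n (S - {Suc n}) = cells (Suc n) S"
    unfolding cells_def c by (intro set_eqI) (auto simp: cols_def)
  show ?thesis
  proof (rule perm_tableauI)
    show "S - {Suc n} \<subseteq> {1..n}" using T.S_sub by (auto simp: le_Suc_eq)
    show "\<exists>i\<in>S - {Suc n}. i < j" if "j \<in> cols n (S - {Suc n})" for j
      using T.col_row[of j] that c by (force simp: cols_def)
    show "F \<subseteq> cells n (S - {Suc n})" using T.F_sub ce by simp
    show "\<exists>i. (i,j) \<in> F" if "j \<in> cols n (S - {Suc n})" for j using T.col_one that c by simp
    show False if "(i,j) \<in> cells n (S - {Suc n})" "(i,j) \<notin> F" "i' < i" "(i',j) \<in> F" "j < j'" "(i,j') \<in> F"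
      for i j i' j' using T.cond2[of i j i' j'] that ce by simp
  qed
qed

locale dcol = T: ptab "Suc n" S F for n S F +
  assumes NS: "Suc n \<notin> S"
begin
definition "F' = {p \<in> F. snd p \<noteq> Suc n}"
definition "X = {i. (i, Suc n) \<in> F}"

lemma cols_eq: "cols (Suc n) S = insert (Suc n) (cols n S)"
  unfolding cols_def using NS by (intro set_eqI) (auto simp: le_Suc_eq)
lemma cols_le: "j \<in> cols n S \<Longrightarrow> j \<le> n" by (simp add: cols_def)
lemma cells_sub: "cells n S \<subseteq> cells (Suc n) S" unfolding cells_def cols_eq by auto

lemma pt': "perm_tableau n (S, F')"
proof (rule perm_tableauI)
  show "S \<subseteq> {1..n}" using T.S_sub NS by (auto simp: le_Suc_eq)
  show "\<exists>i\<in>S. i < j" if "j \<in> cols n S" for j using T.col_row[of j] that cols_eq by simp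
  show "F' \<subseteq> cells n S"
  proof
    fix p assume "p \<in> F'"
    then obtain i j where p: "p = (i,j)" "(i,j) \<in> F" "j \<noteq> Suc n" by (cases p) (auto simp: F'_def)
    then have "i \<in> S" "j \<in> cols (Suc n) S" "i < j" using T.FD by auto
    then show "p \<in> cells n S" using p cols_eq by (simp add: cells_def)
  qed
  show "\<exists>i. (i,j) \<in> F'" if "j \<in> cols n S" for j
  proof -
    have "j \<in> cols (Suc n) S" using that cols_eq by simp
    then obtain i where "(i,j) \<in> F" using T.col_one by blast
    moreover have "j \<noteq> Suc n" using that cols_le by fastforce
    ultimately show ?thesis by (auto simp: F'_def)
  qed
  show False if a: "(i,j) \<in> cells n S" "(i,j) \<notin> F'" "i' < i" "(i',j) \<in> F'" "j < j'" "(i,j') \<in> F'"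
    for i j i' j'
  proof -
    have "j \<noteq> Suc n" using a(1) by (auto simp: cells_def dest: cols_le)
    then have "(i,j) \<notin> F" using a(2) by (simp add: F'_def)
    moreover have "(i,j) \<in> cells (Suc n) S" using a(1) cells_sub by blast
    ultimately show False using T.cond2[of i j i' j'] a(3-6) by (simp add: F'_def)
  qed
qed

sublocale T': ptab n S F' using pt' by unfold_locales

lemma Xne: "X \<noteq> {}" using T.col_one[of "Suc n"] cols_eq by (auto simp: X_def)
lemma F_eq: "F = F' \<union> (\<lambda>i. (i, Suc n)) ` X" by (auto simp: F'_def X_def)
lemma X_nrrT: "r \<in> X \<Longrightarrow> \<not> T.rr r"
  by (rule T.nrr_right[of r "Suc n"]) (auto simp: X_def cols_def dest!: T.r0D)

lemma inv_if_notfree: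
  assumes r: "r \<in> X" "r \<notin> free n (S, F')"
  shows "inversions (Suc n) (S, F) \<noteq> {}"
proof -
  have rF: "(r, Suc n) \<in> F" using r by (simp add: X_def)
  have rS: "r \<in> S" using T.FD[OF rF] by blast
  have "\<not> T'.rr r"
  proof
    assume "T'.rr r"
    then obtain j where j: "T'.r0 r j" by (auto simp: restricted_row_def)
    then have jn: "j \<le> n" "j \<noteq> Suc n" using T'.r0D cols_le by fastforce+
    have "T.r0 r j" using j jn cells_sub by (auto simp: restricted0_def F'_def)
    then show False using T.r0_left[OF _ rF] jn by fastforce
  qed
  then obtain c where c: "c \<in> cols n S" "top1 F' c = r" using r(2) rS by (auto simp: free_def)
  have cN: "c \<noteq> Suc n" using c cols_le by fastforce
  have tc: "top1 F c = r" using c(2) cN unfolding top1_def F'_def by simp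
  have cT: "c \<in> cols (Suc n) S" using c cols_eq by simp
  have Pc: "T.P c = [c]" using T.P_col[OF cT] tc X_nrrT r(1) by simp
  define m0 where "m0 = top1 F (Suc n)"
  have NT: "Suc n \<in> cols (Suc n) S" using cols_eq by simp
  have m0F: "(m0, Suc n) \<in> F" using T.tp_in[OF NT] by (simp add: m0_def)
  have PN: "T.P (Suc n) = [Suc n]" using T.P_col[OF NT] X_nrrT[of m0] m0F by (simp add: m0_def X_def)
  have m0r: "m0 \<le> r" using T.tp_le[OF rF] by (simp add: m0_def)
  have "GT (dotpos (Suc n) S F) c (Suc n) [c] [Suc n]"
    using GT_diff[of "[c]" "[Suc n]" "dotpos (Suc n) S F" c "Suc n"] cN T.dotpos_col[OF cT] T.dotpos_col[OF NT]
      tc m0r cols_le[OF c(1)] by (auto simp: m0_def)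
  then have "(c, Suc n) \<in> inversions (Suc n) (S, F)"
    using cT cN cols_le[OF c(1)] Pc PN by (simp add: inversions_def path_gt_GT)
  then show ?thesis by blast
qed

end


lemma II_Suc: "II (Suc n) = addrow n ` II n \<union> (\<Union>T\<in>II n. addcol n T ` {X. X \<noteq> {} \<and> X \<subseteq> free n T})"
proof (intro set_eqI iffI)
  fix T assume "T \<in> II (Suc n)"
  then obtain S F where T: "T = (S,F)" and pt: "perm_tableau (Suc n) (S,F)" and i0: "inversions (Suc n) (S,F) = {}"
    by (cases T) (auto simp: II_def tab_inv0)
  show "T \<in> addrow n ` II n \<union> (\<Union>T\<in>II n. addcol n T ` {X. X \<noteq> {} \<and> X \<subseteq> free n T})"
  proof (cases "Suc n \<in> S")
    case True
    have pt': "perm_tableau n (S - {Suc n}, F)" using dec_row[OF pt True] .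
    interpret T': ptab n "S - {Suc n}" F using pt' by unfold_locales
    have Si: "insert (Suc n) (S - {Suc n}) = S" using True by blast
    have "inversions n (S - {Suc n}, F) = {}" using T'.ar_inv i0 Si by simp
    then have "(S - {Suc n}, F) \<in> II n" using pt' by (simp add: II_def tab_inv0)
    moreover have "T = addrow n (S - {Suc n}, F)" using T Si by (simp add: addrow_def)
    ultimately show ?thesis by blast
  next
    case False
    interpret D: dcol n S F using pt False by unfold_locales
    have Xf: "D.X \<subseteq> free n (S, D.F')" using D.inv_if_notfree i0 by blast
    interpret A: addc n S D.F' D.X using Xf D.Xne by unfold_locales
    have FF: "A.FF = F" using D.F_eq by (simp add: A.FF_def)
    have "inversions n (S, D.F') = {}" using A.inv_eq FF i0 by simp
    then have "(S, D.F') \<in> II n" using D.pt' by (simp add: II_def tab_inv0)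
    moreover have "T = addcol n (S, D.F') D.X" using T FF by (simp add: addcol_def A.FF_def)
    ultimately show ?thesis using Xf D.Xne by blast
  qed
next
  fix T assume "T \<in> addrow n ` II n \<union> (\<Union>T\<in>II n. addcol n T ` {X. X \<noteq> {} \<and> X \<subseteq> free n T})"
  then show "T \<in> II (Suc n)"
  proof
    assume "T \<in> addrow n ` II n"
    then obtain S F where T: "T = addrow n (S,F)" and "(S,F) \<in> II n" by auto
    then have pt: "perm_tableau n (S,F)" and i0: "inversions n (S,F) = {}" by (auto simp: II_def tab_inv0)
    interpret T': ptab n S F using pt by unfold_locales
    show ?thesis using T'.ar_pt T'.ar_inv i0 T by (simp add: II_def tab_inv0 addrow_def)
  next
    assume "T \<in> (\<Union>T\<in>II n. addcol n T ` {X. X \<noteq> {} \<and> X \<subseteq> free n T})"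
    then obtain S F X where T: "T = addcol n (S,F) X" and "(S,F) \<in> II n" and X: "X \<noteq> {}" "X \<subseteq> free n (S,F)"
      by auto
    then have pt: "perm_tableau n (S,F)" and i0: "inversions n (S,F) = {}" by (auto simp: II_def tab_inv0)
    interpret A: addc n S F X using pt X by unfold_locales auto
    show ?thesis using A.ptT A.inv_eq i0 T by (simp add: II_def tab_inv0 addcol_def A.FF_def)
  qed
qed

lemma II_pt: "T \<in> II n \<Longrightarrow> perm_tableau n T" by (simp add: II_def)

lemma free_sub: "perm_tableau n T \<Longrightarrow> free n T \<subseteq> {1..n}"
  unfolding free_def perm_tableau_def Let_def by auto

lemma stat_row: "T \<in> II n \<Longrightarrow> card (free (Suc n) (addrow n T)) = Suc (card (free n T))"
proof -
  assume "T \<in> II n"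
  then obtain S F where T: "T = (S,F)" and pt: "perm_tableau n (S,F)" by (cases T) (auto simp: II_def)
  interpret T': ptab n S F using pt by unfold_locales
  have "finite (free n (S,F))" using free_sub[OF pt] finite_subset by blast
  moreover have "Suc n \<notin> free n (S,F)" using free_sub[OF pt] by auto
  ultimately show ?thesis using T'.ar_free T by (simp add: addrow_def)
qed

lemma stat_col: "T \<in> II n \<Longrightarrow> X \<noteq> {} \<Longrightarrow> X \<subseteq> free n T \<Longrightarrow>
   free (Suc n) (addcol n T X) = {r \<in> X. Min X < r} \<union> {r \<in> free n T. r < Min X}"
proof -
  assume "T \<in> II n" "X \<noteq> {}" "X \<subseteq> free n T"
  moreover obtain S F where T: "T = (S,F)" by (cases T)
  ultimately have pt: "perm_tableau n (S,F)" and X: "X \<noteq> {}" "X \<subseteq> free n (S,F)" by (auto simp: II_def)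
  interpret A: addc n S F X using pt X by unfold_locales auto
  show ?thesis using A.free_T T by (simp add: addcol_def A.FF_def A.m_def)
qed

lemma addrow_inj: "T \<in> II n \<Longrightarrow> T' \<in> II n \<Longrightarrow> addrow n T = addrow n T' \<Longrightarrow> T = T'"
proof -
  assume a: "T \<in> II n" "T' \<in> II n" "addrow n T = addrow n T'"
  have "Suc n \<notin> fst T" "Suc n \<notin> fst T'" using a(1,2) by (auto simp: II_def perm_tableau_def Let_def)
  then have "fst T = fst T'" using a(3) unfolding addrow_def
    by (metis Pair_inject insert_Diff_if singletonI Diff_insert_absorb)
  moreover have "snd T = snd T'" using a(3) by (simp add: addrow_def)
  ultimately show ?thesis by (simp add: prod_eq_iff)
qed

lemma snd_noN: "T \<in> II n \<Longrightarrow> p \<in> snd T \<Longrightarrow> snd p \<le> n"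
  unfolding II_def perm_tableau_def Let_def cells_def cols_def by auto

lemma addcol_inj: "T \<in> II n \<Longrightarrow> T' \<in> II n \<Longrightarrow> addcol n T X = addcol n T' X' \<Longrightarrow> T = T' \<and> X = X'"
proof -
  assume a: "T \<in> II n" "T' \<in> II n" and e: "addcol n T X = addcol n T' X'"
  have f: "fst T = fst T'" using e by (simp add: addcol_def)
  have s: "snd T \<union> (\<lambda>i. (i, Suc n)) ` X = snd T' \<union> (\<lambda>i. (i, Suc n)) ` X'" using e by (simp add: addcol_def)
  have "snd T = {p \<in> snd T \<union> (\<lambda>i. (i, Suc n)) ` X. snd p \<noteq> Suc n}" using snd_noN[OF a(1)] by fastforce
  also have "\<dots> = {p \<in> snd T' \<union> (\<lambda>i. (i, Suc n)) ` X'. snd p \<noteq> Suc n}" using s by simp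
  also have "\<dots> = snd T'" using snd_noN[OF a(2)] by fastforce
  finally have "snd T = snd T'" .
  moreover have "X = X'"
  proof -
    have "X = {i. (i, Suc n) \<in> snd T \<union> (\<lambda>i. (i, Suc n)) ` X}" using snd_noN[OF a(1)] by fastforce
    also have "\<dots> = {i. (i, Suc n) \<in> snd T' \<union> (\<lambda>i. (i, Suc n)) ` X'}" using s by simp
    also have "\<dots> = X'" using snd_noN[OF a(2)] by fastforce
    finally show ?thesis .
  qed
  ultimately show ?thesis using f by (simp add: prod_eq_iff)
qed

lemma row_col_disj: "T \<in> II n \<Longrightarrow> T' \<in> II n \<Longrightarrow> addrow n T \<noteq> addcol n T' X"
proof -
  assume a: "T \<in> II n" "T' \<in> II n"
  have "Suc n \<notin> fst T'" using a(2) by (auto simp: II_def perm_tableau_def Let_def)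
  then show ?thesis by (auto simp: addrow_def addcol_def)
qed

lemma finite_II: "finite (II n)"
proof -
  have "II n \<subseteq> Pow {1..n} \<times> Pow ({1..n} \<times> {1..n})"
    unfolding II_def perm_tableau_def Let_def cells_def cols_def by auto
  then show ?thesis by (rule finite_subset) simp
qed


section \<open>Generic counting\<close>

lemma count_decomp:
  fixes f :: "'a \<Rightarrow> 'b" and g :: "'a \<Rightarrow> 'c \<Rightarrow> 'b"
  assumes finA: "finite A" and finY: "\<And>x. x\<in>A \<Longrightarrow> finite (Ys x)"
    and B: "B = f ` A \<union> (\<Union>x\<in>A. g x ` Ys x)"
    and injf: "\<And>x y. x\<in>A \<Longrightarrow> y\<in>A \<Longrightarrow> f x = f y \<Longrightarrow> x = y"
    and injg: "\<And>x y Y Y'. x\<in>A \<Longrightarrow> y\<in>A \<Longrightarrow> Y\<in>Ys x \<Longrightarrow> Y'\<in>Ys y \<Longrightarrow> g x Y = g y Y' \<Longrightarrow> x = y \<and> Y = Y'"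
    and disj: "\<And>x y Y. x\<in>A \<Longrightarrow> y\<in>A \<Longrightarrow> Y\<in>Ys y \<Longrightarrow> f x \<noteq> g y Y"
    and tf: "\<And>x. x \<in> A \<Longrightarrow> t (f x) = Suc (s x)"
    and tg: "\<And>x Y. x\<in>A \<Longrightarrow> Y \<in> Ys x \<Longrightarrow> t (g x Y) = u x Y"
  shows "card {z\<in>B. t z = b} = card {x\<in>A. Suc (s x) = b} + (\<Sum>x\<in>A. card {Y\<in>Ys x. u x Y = b})"
proof -
  define A1 where "A1 = {x\<in>A. Suc (s x) = b}"
  define Y1 where "Y1 x = {Y\<in>Ys x. u x Y = b}" for x
  have eq: "{z\<in>B. t z = b} = f ` A1 \<union> (\<Union>x\<in>A. g x ` Y1 x)"
    unfolding B A1_def Y1_def using tf tg by auto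
  have fin1: "finite (f ` A1)" using finA by (simp add: A1_def)
  have fin2: "finite (\<Union>x\<in>A. g x ` Y1 x)" using finA finY by (simp add: Y1_def)
  have dj: "f ` A1 \<inter> (\<Union>x\<in>A. g x ` Y1 x) = {}" using disj by (fastforce simp: A1_def Y1_def)
  have c1: "card (f ` A1) = card A1"
    by (rule card_image) (auto simp: A1_def inj_on_def intro: injf)
  have c2: "card (\<Union>x\<in>A. g x ` Y1 x) = (\<Sum>x\<in>A. card (g x ` Y1 x))"
    by (rule card_UN_disjoint) (use finA finY injg in \<open>auto simp: Y1_def\<close>)
  have c3: "card (g x ` Y1 x) = card (Y1 x)" if "x \<in> A" for x
    by (rule card_image) (use injg that in \<open>auto simp: Y1_def inj_on_def\<close>)
  show ?thesis
    unfolding eq using card_Un_disjoint[OF fin1 fin2 dj] c1 c2 c3 by (simp add: A1_def Y1_def)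
qed

lemma sum_by_stat:
  fixes s :: "'a \<Rightarrow> nat"
  assumes "finite A" "\<And>x. x\<in>A \<Longrightarrow> s x \<le> K"
  shows "(\<Sum>x\<in>A. h (s x)) = (\<Sum>a\<le>K. card {x\<in>A. s x = a} * (h a :: nat))"
proof -
  have "(\<Sum>a\<in>{..K}. \<Sum>x\<in>{x\<in>A. s x = a}. h (s x)) = (\<Sum>x\<in>A. h (s x))"
    by (rule sum.group) (use assms in auto)
  then have "(\<Sum>x\<in>A. h (s x)) = (\<Sum>a\<in>{..K}. \<Sum>x\<in>{x\<in>A. s x = a}. h (s x))" by simp
  also have "\<dots> = (\<Sum>a\<le>K. card {x\<in>A. s x = a} * h a)"
    by (intro sum.cong refl) simp
  finally show ?thesis .
qed

lemma card_filter_sum: "finite A \<Longrightarrow> card {x\<in>A. Q x} = (\<Sum>x\<in>A. if Q x then 1 else 0)"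
  using sum.inter_filter[of A "\<lambda>_. 1::nat" Q] by simp

definition cc :: "nat \<Rightarrow> nat \<Rightarrow> nat" where "cc a b = (if b < a then a choose b else 0)"

lemma cnt_part:
  assumes fZ: "finite Z"
  shows "card {Y. Y \<noteq> {} \<and> Y \<subseteq> Z \<and> card (Z - Y) = b} = cc (card Z) b"
proof -
  have "bij_betw (\<lambda>Y. Z - Y) {Y. Y \<noteq> {} \<and> Y \<subseteq> Z \<and> card (Z - Y) = b} {W. W \<subseteq> Z \<and> card W = b \<and> W \<noteq> Z}"
  proof (rule bij_betwI[where g="\<lambda>W. Z - W"])
    have dd: "\<And>W. W \<subseteq> Z \<Longrightarrow> Z - (Z - W) = W" by auto
    show "(-) Z \<in> {Y. Y \<noteq> {} \<and> Y \<subseteq> Z \<and> card (Z - Y) = b} \<rightarrow> {W. W \<subseteq> Z \<and> card W = b \<and> W \<noteq> Z}"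
      by auto
    show "(-) Z \<in> {W. W \<subseteq> Z \<and> card W = b \<and> W \<noteq> Z} \<rightarrow> {Y. Y \<noteq> {} \<and> Y \<subseteq> Z \<and> card (Z - Y) = b}"
      using dd by auto
    show "Z - (Z - x) = x" if "x \<in> {Y. Y \<noteq> {} \<and> Y \<subseteq> Z \<and> card (Z - Y) = b}" for x using that dd by auto
    show "Z - (Z - y) = y" if "y \<in> {W. W \<subseteq> Z \<and> card W = b \<and> W \<noteq> Z}" for y using that dd by auto
  qed
  then have e: "card {Y. Y \<noteq> {} \<and> Y \<subseteq> Z \<and> card (Z - Y) = b} = card {W. W \<subseteq> Z \<and> card W = b \<and> W \<noteq> Z}"
    by (rule bij_betw_same_card)
  show ?thesis
  proof (cases "b < card Z")
    case True
    then have "{W. W \<subseteq> Z \<and> card W = b \<and> W \<noteq> Z} = {W. W \<subseteq> Z \<and> card W = b}" by auto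
    then show ?thesis using e n_subsets[OF fZ, of b] True by (simp add: cc_def)
  next
    case False
    have E0: "{W. W \<subseteq> Z \<and> card W = b \<and> W \<noteq> Z} = {}"
    proof (rule ccontr)
      assume "{W. W \<subseteq> Z \<and> card W = b \<and> W \<noteq> Z} \<noteq> {}"
      then obtain W where W: "W \<subseteq> Z" "card W = b" "W \<noteq> Z" by blast
      then have "card W < card Z" using fZ by (meson psubsetI psubset_card_mono)
      then show False using W(2) False by simp
    qed
    have c0: "card {W. W \<subseteq> Z \<and> card W = b \<and> W \<noteq> Z} = 0" unfolding E0 by simp
    show ?thesis using e c0 False by (simp add: cc_def)
  qed
qed

definition phi :: "nat set \<Rightarrow> nat set \<Rightarrow> nat set" where
  "phi Z X = insert (Min X) ({r\<in>Z. Min X < r} - X)"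

lemma phi_props:
  fixes Z :: "nat set"
  assumes fZ: "finite Z" and X: "X \<noteq> {}" "X \<subseteq> Z"
  shows "phi Z X \<noteq> {}" "phi Z X \<subseteq> Z" "Min (phi Z X) = Min X" "phi Z (phi Z X) = X"
    "Z - phi Z X = {r\<in>X. Min X < r} \<union> {r\<in>Z. r < Min X}"
proof -
  have fX: "finite X" using fZ X(2) finite_subset by blast
  have mX: "Min X \<in> X" using Min_in[OF fX X(1)] .
  have mle: "\<And>x. x \<in> X \<Longrightarrow> Min X \<le> x" using Min_le[OF fX] by blast
  show ne: "phi Z X \<noteq> {}" by (simp add: phi_def)
  show sub: "phi Z X \<subseteq> Z" using mX X(2) by (auto simp: phi_def)
  have fP: "finite (phi Z X)" using sub fZ finite_subset by blast
  show mm: "Min (phi Z X) = Min X"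
  proof (rule Min_eqI[OF fP])
    show "Min X \<in> phi Z X" by (simp add: phi_def)
    show "Min X \<le> y" if "y \<in> phi Z X" for y using that by (auto simp: phi_def)
  qed
  show "phi Z (phi Z X) = X"
    unfolding phi_def[of Z "phi Z X"] mm unfolding phi_def using mX mle X(2)
    by (auto simp: order.order_iff_strict)
  show "Z - phi Z X = {r\<in>X. Min X < r} \<union> {r\<in>Z. r < Min X}"
    using mX mle X(2) by (auto simp: phi_def)
qed

lemma cnt_tab:
  fixes Z :: "nat set"
  assumes fZ: "finite Z"
  shows "card {X. X \<noteq> {} \<and> X \<subseteq> Z \<and> card ({r\<in>X. Min X < r} \<union> {r\<in>Z. r < Min X}) = b}
       = card {Y. Y \<noteq> {} \<and> Y \<subseteq> Z \<and> card (Z - Y) = b}"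
proof -
  have "bij_betw (phi Z) {X. X \<noteq> {} \<and> X \<subseteq> Z \<and> card ({r\<in>X. Min X < r} \<union> {r\<in>Z. r < Min X}) = b}
      {Y. Y \<noteq> {} \<and> Y \<subseteq> Z \<and> card (Z - Y) = b}"
  proof (rule bij_betwI[where g="phi Z"])
    show "phi Z \<in> {X. X \<noteq> {} \<and> X \<subseteq> Z \<and> card ({r\<in>X. Min X < r} \<union> {r\<in>Z. r < Min X}) = b}
      \<rightarrow> {Y. Y \<noteq> {} \<and> Y \<subseteq> Z \<and> card (Z - Y) = b}"
      using phi_props[OF fZ] by auto
    show "phi Z \<in> {Y. Y \<noteq> {} \<and> Y \<subseteq> Z \<and> card (Z - Y) = b} \<rightarrow>
      {X. X \<noteq> {} \<and> X \<subseteq> Z \<and> card ({r\<in>X. Min X < r} \<union> {r\<in>Z. r < Min X}) = b}"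
    proof
      fix Y assume Y: "Y \<in> {Y. Y \<noteq> {} \<and> Y \<subseteq> Z \<and> card (Z - Y) = b}"
      then have a: "Y \<noteq> {}" "Y \<subseteq> Z" "card (Z - Y) = b" by auto
      have "Z - phi Z (phi Z Y) = {r\<in>phi Z Y. Min (phi Z Y) < r} \<union> {r\<in>Z. r < Min (phi Z Y)}"
        using phi_props[OF fZ phi_props(1,2)[OF fZ a(1,2)]] by blast
      then show "phi Z Y \<in> {X. X \<noteq> {} \<and> X \<subseteq> Z \<and> card ({r\<in>X. Min X < r} \<union> {r\<in>Z. r < Min X}) = b}"
        using phi_props[OF fZ a(1,2)] a(3) by auto
    qed
    show "phi Z (phi Z x) = x" if "x \<in> {X. X \<noteq> {} \<and> X \<subseteq> Z \<and> card ({r\<in>X. Min X < r} \<union> {r\<in>Z. r < Min X}) = b}" for x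
      using phi_props[OF fZ] that by auto
    show "phi Z (phi Z y) = y" if "y \<in> {Y. Y \<noteq> {} \<and> Y \<subseteq> Z \<and> card (Z - Y) = b}" for y
      using phi_props[OF fZ] that by auto
  qed
  then show ?thesis by (rule bij_betw_same_card)
qed


section \<open>Partitions\<close>

definition sing :: "'a set set \<Rightarrow> 'a set" where "sing P = {x. {x} \<in> P}"
definition mrg :: "'a \<Rightarrow> 'a set set \<Rightarrow> 'a set \<Rightarrow> 'a set set" where
  "mrg a P Y = insert (insert a Y) (P - (\<lambda>y. {y}) ` Y)"

lemma part_iff: "partition_on A P \<longleftrightarrow> \<Union>P = A \<and> (\<forall>p\<in>P. \<forall>q\<in>P. p \<noteq> q \<longrightarrow> p \<inter> q = {}) \<and> {} \<notin> P"
  by (auto simp: partition_on_def disjoint_def)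

lemma part_block_eq: "partition_on A P \<Longrightarrow> p \<in> P \<Longrightarrow> q \<in> P \<Longrightarrow> x \<in> p \<Longrightarrow> x \<in> q \<Longrightarrow> p = q"
  unfolding part_iff by blast

lemma sing_sub: "partition_on A P \<Longrightarrow> sing P \<subseteq> A"
  unfolding part_iff sing_def by blast

lemma pins_ok: "partition_on A P \<Longrightarrow> a \<notin> A \<Longrightarrow> partition_on (insert a A) (insert {a} P)"
  unfolding part_iff by blast

lemma pmrg_ok:
  assumes P: "partition_on A P" and a: "a \<notin> A" and Y: "Y \<noteq> {}" "Y \<subseteq> sing P"
  shows "partition_on (insert a A) (mrg a P Y)"
proof -
  have YA: "Y \<subseteq> A" using Y(2) sing_sub[OF P] by blast
  have sY: "\<And>y. y \<in> Y \<Longrightarrow> {y} \<in> P" using Y(2) by (auto simp: sing_def)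
  have U: "\<Union>P = A" using P by (simp add: part_iff)
  have bl: "\<And>p y. p \<in> P \<Longrightarrow> y \<in> Y \<Longrightarrow> y \<in> p \<Longrightarrow> p = {y}" using part_block_eq[OF P] sY by blast
  have U0: "\<Union>(P - (\<lambda>y. {y}) ` Y) = A - Y"
  proof (intro set_eqI iffI)
    fix x assume "x \<in> \<Union>(P - (\<lambda>y. {y}) ` Y)"
    then obtain p where p: "p \<in> P" "p \<notin> (\<lambda>y. {y}) ` Y" "x \<in> p" by blast
    then show "x \<in> A - Y" using U bl by blast
  next
    fix x assume x: "x \<in> A - Y"
    then obtain p where p: "p \<in> P" "x \<in> p" using U by blast
    then have "p \<notin> (\<lambda>y. {y}) ` Y" using x by auto
    then show "x \<in> \<Union>(P - (\<lambda>y. {y}) ` Y)" using p by blast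
  qed
  show ?thesis unfolding part_iff
  proof (intro conjI)
    show "\<Union>(mrg a P Y) = insert a A" using U0 YA by (auto simp: mrg_def)
    show "{} \<notin> mrg a P Y" using P by (auto simp: mrg_def part_iff)
    show "\<forall>p\<in>mrg a P Y. \<forall>q\<in>mrg a P Y. p \<noteq> q \<longrightarrow> p \<inter> q = {}"
    proof -
      have d: "p \<inter> insert a Y = {}" if "p \<in> P - (\<lambda>y. {y}) ` Y" for p
      proof -
        have "a \<notin> p" using that U a by blast
        moreover have "p \<inter> Y = {}" using that bl by blast
        ultimately show ?thesis by blast
      qed
      have dP: "\<And>p q. p \<in> P \<Longrightarrow> q \<in> P \<Longrightarrow> p \<noteq> q \<Longrightarrow> p \<inter> q = {}" using P by (simp add: part_iff)
      show ?thesis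
      proof (intro ballI impI)
        fix p q assume p: "p \<in> mrg a P Y" and q: "q \<in> mrg a P Y" and pq: "p \<noteq> q"
        consider "p = insert a Y" "q \<in> P - (\<lambda>y. {y}) ` Y" | "q = insert a Y" "p \<in> P - (\<lambda>y. {y}) ` Y"
          | "p \<in> P" "q \<in> P" using p q pq unfolding mrg_def by blast
        then show "p \<inter> q = {}"
        proof cases
          case 1 then show ?thesis using d[of q] by blast
        next
          case 2 then show ?thesis using d[of p] by blast
        next
          case 3 then show ?thesis using dP pq by blast
        qed
      qed
    qed
  qed
qed

lemma decomp_part:
  assumes Q: "partition_on (insert a A) Q" and a: "a \<notin> A"
  shows "(\<exists>P. partition_on A P \<and> Q = insert {a} P) \<or>
         (\<exists>P Y. partition_on A P \<and> Y \<noteq> {} \<and> Y \<subseteq> sing P \<and> Q = mrg a P Y)"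
proof -
  have U: "\<Union>Q = insert a A" and dj: "\<And>p q. p\<in>Q \<Longrightarrow> q\<in>Q \<Longrightarrow> p \<noteq> q \<Longrightarrow> p \<inter> q = {}" and ne: "{} \<notin> Q"
    using Q by (auto simp: part_iff)
  obtain K where K: "K \<in> Q" "a \<in> K" using U by blast
  have oth: "\<And>q. q \<in> Q \<Longrightarrow> q \<noteq> K \<Longrightarrow> a \<notin> q" using dj K by blast
  have UK: "\<Union>(Q - {K}) = insert a A - K"
  proof (intro set_eqI iffI)
    fix x assume "x \<in> \<Union>(Q - {K})"
    then obtain q where "q \<in> Q" "q \<noteq> K" "x \<in> q" by blast
    then show "x \<in> insert a A - K" using U dj[of q K] K(1) by blast
  next
    fix x assume "x \<in> insert a A - K"
    then obtain q where "q \<in> Q" "x \<in> q" "q \<noteq> K" using U by blast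
    then show "x \<in> \<Union>(Q - {K})" by blast
  qed
  have KA: "K \<subseteq> insert a A" using U K by blast
  show ?thesis
  proof (cases "K = {a}")
    case True
    have "partition_on A (Q - {{a}})" unfolding part_iff
      using UK True dj ne a by auto
    moreover have "Q = insert {a} (Q - {{a}})" using K True by blast
    ultimately show ?thesis by blast
  next
    case False
    define Y where "Y = K - {a}"
    define P where "P = (Q - {K}) \<union> (\<lambda>y. {y}) ` Y"
    have Yne: "Y \<noteq> {}" using False K(2) by (auto simp: Y_def)
    have noY: "\<And>y. y \<in> Y \<Longrightarrow> {y} \<notin> Q - {K}"
    proof
      fix y assume y: "y \<in> Y" "{y} \<in> Q - {K}"
      then have "{y} \<inter> K = {}" using dj K(1) by blast
      then show False using y(1) by (auto simp: Y_def)
    qed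
    have PA: "partition_on A P" unfolding part_iff
    proof (intro conjI)
      show "\<Union>P = A" using UK KA a K(2) by (auto simp: P_def Y_def)
      show "{} \<notin> P" using ne by (auto simp: P_def)
      show "\<forall>p\<in>P. \<forall>q\<in>P. p \<noteq> q \<longrightarrow> p \<inter> q = {}"
      proof (intro ballI impI)
        fix p q assume p: "p \<in> P" and q: "q \<in> P" and pq: "p \<noteq> q"
        have sK: "\<And>y r. y \<in> Y \<Longrightarrow> r \<in> Q - {K} \<Longrightarrow> {y} \<inter> r = {}"
          using dj K(1) by (auto simp: Y_def)
        show "p \<inter> q = {}" using p q pq dj sK by (auto simp: P_def) (metis Int_commute)+
      qed
    qed
    have YP: "Y \<subseteq> sing P" by (auto simp: sing_def P_def)
    have "mrg a P Y = Q"
    proof -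
      have "P - (\<lambda>y. {y}) ` Y = Q - {K}" using noY by (auto simp: P_def)
      moreover have "insert a Y = K" using K(2) by (auto simp: Y_def)
      ultimately show ?thesis using K(1) by (auto simp: mrg_def)
    qed
    then show ?thesis using PA Yne YP by blast
  qed
qed

lemma mrg_block:
  assumes P: "partition_on A P" and a: "a \<notin> A" and Y: "Y \<subseteq> sing P"
  shows "{K \<in> mrg a P Y. a \<in> K} = {insert a Y}"
proof -
  have "a \<notin> \<Union>P" using P a by (simp add: part_iff)
  then show ?thesis by (auto simp: mrg_def)
qed

lemma mrg_inj:
  assumes P: "partition_on A P" "Y \<noteq> {}" "Y \<subseteq> sing P" and P': "partition_on A P'" "Y' \<noteq> {}" "Y' \<subseteq> sing P'"
    and a: "a \<notin> A" and e: "mrg a P Y = mrg a P' Y'"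
  shows "P = P' \<and> Y = Y'"
proof -
  have "{insert a Y} = {insert a Y'}" using mrg_block[OF P(1) a P(3)] mrg_block[OF P'(1) a P'(3)] e by simp
  moreover have "a \<notin> Y" "a \<notin> Y'" using sing_sub[OF P(1)] sing_sub[OF P'(1)] P(3) P'(3) a by auto
  ultimately have YY: "Y = Y'" by (metis insert_ident singleton_inject)
  have rec: "\<And>P Y. partition_on A P \<Longrightarrow> Y \<subseteq> sing P \<Longrightarrow> P = (mrg a P Y - {insert a Y}) \<union> (\<lambda>y. {y}) ` Y"
  proof -
    fix P Y assume P: "partition_on A P" and Y: "Y \<subseteq> sing P"
    have "insert a Y \<notin> P" using P a by (auto simp: part_iff)
    moreover have "(\<lambda>y. {y}) ` Y \<subseteq> P" using Y by (auto simp: sing_def)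
    ultimately show "P = (mrg a P Y - {insert a Y}) \<union> (\<lambda>y. {y}) ` Y" by (auto simp: mrg_def)
  qed
  have "P = P'" using rec[OF P(1) P(3)] rec[OF P'(1) P'(3)] e YY by simp
  then show ?thesis using YY by simp
qed

lemma ins_mrg_disj:
  assumes P: "partition_on A P" and P': "partition_on A P'" "Y \<noteq> {}" "Y \<subseteq> sing P'" and a: "a \<notin> A"
  shows "insert {a} P \<noteq> mrg a P' Y"
proof
  assume e: "insert {a} P = mrg a P' Y"
  have "{a} \<in> mrg a P' Y" using e by blast
  moreover have "a \<notin> Y" using sing_sub[OF P'(1)] P'(3) a by auto
  moreover have "{a} \<notin> P'" using P'(1) a by (auto simp: part_iff)
  ultimately show False using P'(2) by (auto simp: mrg_def)
qed

lemma sing_ins: "partition_on A P \<Longrightarrow> a \<notin> A \<Longrightarrow> sing (insert {a} P) = insert a (sing P) \<and> a \<notin> sing P"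
  using sing_sub[of A P] by (auto simp: sing_def)

lemma sing_mrg: "partition_on A P \<Longrightarrow> a \<notin> A \<Longrightarrow> Y \<noteq> {} \<Longrightarrow> Y \<subseteq> sing P \<Longrightarrow> sing (mrg a P Y) = sing P - Y"
proof -
  assume P: "partition_on A P" and a: "a \<notin> A" and Y: "Y \<noteq> {}" "Y \<subseteq> sing P"
  have "a \<notin> Y" using sing_sub[OF P] Y(2) a by auto
  then have "\<And>x. insert a Y \<noteq> {x}" using Y(1) by (metis insert_not_empty singleton_insert_inj_eq' singleton_iff subsetI subset_singletonD)
  then show ?thesis by (auto simp: sing_def mrg_def)
qed

definition PP :: "nat \<Rightarrow> nat set set set" where "PP n = {P. partition_on {1..n} P}"

lemma PP_Suc: "PP (Suc n) = (insert {Suc n}) ` PP n \<union> (\<Union>P\<in>PP n. mrg (Suc n) P ` {Y. Y \<noteq> {} \<and> Y \<subseteq> sing P})"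
proof -
  have A: "{1..Suc n} = insert (Suc n) {1..n}" by auto
  have a: "Suc n \<notin> {1..n}" by simp
  show ?thesis
  proof (intro set_eqI iffI)
    fix Q assume "Q \<in> PP (Suc n)"
    then have "partition_on (insert (Suc n) {1..n}) Q" unfolding PP_def A by simp
    from decomp_part[OF this a] show "Q \<in> (insert {Suc n}) ` PP n \<union> (\<Union>P\<in>PP n. mrg (Suc n) P ` {Y. Y \<noteq> {} \<and> Y \<subseteq> sing P})"
    proof
      assume "\<exists>P. partition_on {1..n} P \<and> Q = insert {Suc n} P"
      then obtain P where "partition_on {1..n} P" "Q = insert {Suc n} P" by blast
      then show ?thesis by (auto simp: PP_def)
    next
      assume "\<exists>P Y. partition_on {1..n} P \<and> Y \<noteq> {} \<and> Y \<subseteq> sing P \<and> Q = mrg (Suc n) P Y"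
      then obtain P Y where "partition_on {1..n} P" "Y \<noteq> {}" "Y \<subseteq> sing P" "Q = mrg (Suc n) P Y" by blast
      then show ?thesis by (auto simp: PP_def)
    qed
  next
    fix Q assume "Q \<in> (insert {Suc n}) ` PP n \<union> (\<Union>P\<in>PP n. mrg (Suc n) P ` {Y. Y \<noteq> {} \<and> Y \<subseteq> sing P})"
    then show "Q \<in> PP (Suc n)"
    proof
      assume "Q \<in> (insert {Suc n}) ` PP n"
      then obtain P where "partition_on {1..n} P" "Q = insert {Suc n} P" by (auto simp: PP_def)
      then show ?thesis using pins_ok[OF _ a] unfolding PP_def A by simp
    next
      assume "Q \<in> (\<Union>P\<in>PP n. mrg (Suc n) P ` {Y. Y \<noteq> {} \<and> Y \<subseteq> sing P})"
      then obtain P Y where "partition_on {1..n} P" "Y \<noteq> {}" "Y \<subseteq> sing P" "Q = mrg (Suc n) P Y"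
        by (auto simp: PP_def)
      then show ?thesis using pmrg_ok[OF _ a] unfolding PP_def A by simp
    qed
  qed
qed

lemma finite_PP: "finite (PP n)" using finitely_many_partition_on[of "{1..n}"] by (simp add: PP_def)


lemma free_fin: "T \<in> II n \<Longrightarrow> finite (free n T)"
  using free_sub[OF II_pt] finite_subset by blast
lemma free_card: "T \<in> II n \<Longrightarrow> card (free n T) \<le> n"
  using card_mono[OF finite_atLeastAtMost free_sub[OF II_pt]] by fastforce

lemma NI_Suc: "card {T\<in>II (Suc n). card (free (Suc n) T) = b}
  = card {T\<in>II n. Suc (card (free n T)) = b} + (\<Sum>T\<in>II n. cc (card (free n T)) b)"
proof -
  have "card {T\<in>II (Suc n). card (free (Suc n) T) = b}
    = card {T\<in>II n. Suc (card (free n T)) = b} + (\<Sum>T\<in>II n. card {X \<in> {X. X \<noteq> {} \<and> X \<subseteq> free n T}.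
        card ({r\<in>X. Min X < r} \<union> {r\<in>free n T. r < Min X}) = b})"
  proof (rule count_decomp[where A="II n" and Ys="\<lambda>T. {X. X \<noteq> {} \<and> X \<subseteq> free n T}" and f="addrow n" and g="addcol n"
        and t="\<lambda>T. card (free (Suc n) T)" and s="\<lambda>T. card (free n T)"
        and u="\<lambda>T X. card ({r\<in>X. Min X < r} \<union> {r\<in>free n T. r < Min X})"])
    show "finite (II n)" by (rule finite_II)
    show "finite {X. X \<noteq> {} \<and> X \<subseteq> free n x}" if "x \<in> II n" for x
      using free_fin[OF that] by simp
    show "II (Suc n) = addrow n ` II n \<union> (\<Union>x\<in>II n. addcol n x ` {X. X \<noteq> {} \<and> X \<subseteq> free n x})"
      by (rule II_Suc)
    show "x = y" if "x \<in> II n" "y \<in> II n" "addrow n x = addrow n y" for x y using addrow_inj that by blast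
    show "x = y \<and> Y = Y'" if "x \<in> II n" "y \<in> II n" "Y \<in> {X. X \<noteq> {} \<and> X \<subseteq> free n x}"
      "Y' \<in> {X. X \<noteq> {} \<and> X \<subseteq> free n y}" "addcol n x Y = addcol n y Y'" for x y Y Y'
      using addcol_inj that by blast
    show "addrow n x \<noteq> addcol n y Y" if "x \<in> II n" "y \<in> II n" for x y Y using row_col_disj that by blast
    show "card (free (Suc n) (addrow n x)) = Suc (card (free n x))" if "x \<in> II n" for x using stat_row that by blast
    show "card (free (Suc n) (addcol n x Y)) = card ({r\<in>Y. Min Y < r} \<union> {r\<in>free n x. r < Min Y})"
      if "x \<in> II n" "Y \<in> {X. X \<noteq> {} \<and> X \<subseteq> free n x}" for x Y using stat_col that by simp
  qed
  also have "\<dots> = card {T\<in>II n. Suc (card (free n T)) = b} + (\<Sum>T\<in>II n. cc (card (free n T)) b)"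
  proof -
    have "card {X \<in> {X. X \<noteq> {} \<and> X \<subseteq> free n T}. card ({r\<in>X. Min X < r} \<union> {r\<in>free n T. r < Min X}) = b}
       = cc (card (free n T)) b" if "T \<in> II n" for T
    proof -
      have "{X \<in> {X. X \<noteq> {} \<and> X \<subseteq> free n T}. card ({r\<in>X. Min X < r} \<union> {r\<in>free n T. r < Min X}) = b}
        = {X. X \<noteq> {} \<and> X \<subseteq> free n T \<and> card ({r\<in>X. Min X < r} \<union> {r\<in>free n T. r < Min X}) = b}" by auto
      then show ?thesis using cnt_tab[OF free_fin[OF that]] cnt_part[OF free_fin[OF that]] by simp
    qed
    then show ?thesis by simp
  qed
  finally show ?thesis .
qed

lemma PP_part: "P \<in> PP n \<Longrightarrow> partition_on {1..n} P" by (simp add: PP_def)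
lemma sing_fin: "P \<in> PP n \<Longrightarrow> finite (sing P)"
  using sing_sub[OF PP_part] finite_subset by blast
lemma sing_card: "P \<in> PP n \<Longrightarrow> card (sing P) \<le> n"
  using card_mono[OF finite_atLeastAtMost sing_sub[OF PP_part]] by fastforce
lemma a_notin: "Suc n \<notin> {1..n}" by simp

lemma NP_Suc: "card {P\<in>PP (Suc n). card (sing P) = b}
  = card {P\<in>PP n. Suc (card (sing P)) = b} + (\<Sum>P\<in>PP n. cc (card (sing P)) b)"
proof -
  have "card {P\<in>PP (Suc n). card (sing P) = b}
    = card {P\<in>PP n. Suc (card (sing P)) = b} + (\<Sum>P\<in>PP n. card {Y \<in> {Y. Y \<noteq> {} \<and> Y \<subseteq> sing P}.
        card (sing P - Y) = b})"
  proof (rule count_decomp[where A="PP n" and Ys="\<lambda>P. {Y. Y \<noteq> {} \<and> Y \<subseteq> sing P}" and f="insert {Suc n}"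
        and g="mrg (Suc n)" and t="\<lambda>P. card (sing P)" and s="\<lambda>P. card (sing P)"
        and u="\<lambda>P Y. card (sing P - Y)"])
    show "finite (PP n)" by (rule finite_PP)
    show "finite {Y. Y \<noteq> {} \<and> Y \<subseteq> sing x}" if "x \<in> PP n" for x using sing_fin[OF that] by simp
    show "PP (Suc n) = insert {Suc n} ` PP n \<union> (\<Union>x\<in>PP n. mrg (Suc n) x ` {Y. Y \<noteq> {} \<and> Y \<subseteq> sing x})"
      by (rule PP_Suc)
    show "x = y" if "x \<in> PP n" "y \<in> PP n" "insert {Suc n} x = insert {Suc n} y" for x y
    proof -
      have nx: "{Suc n} \<notin> z" if "z \<in> PP n" for z
      proof
        assume "{Suc n} \<in> z" then have "Suc n \<in> \<Union>z" by blast
        moreover have "\<Union>z = {1..n}" using partition_onD1[OF PP_part[OF that]] by simp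
        ultimately show False by simp
      qed
      have "{Suc n} \<notin> x" "{Suc n} \<notin> y" using nx that(1,2) by auto
      then show ?thesis using that(3) by (metis insert_ident)
    qed
    show "x = y \<and> Y = Y'" if "x \<in> PP n" "y \<in> PP n" "Y \<in> {Y. Y \<noteq> {} \<and> Y \<subseteq> sing x}"
      "Y' \<in> {Y. Y \<noteq> {} \<and> Y \<subseteq> sing y}" "mrg (Suc n) x Y = mrg (Suc n) y Y'" for x y Y Y'
      using mrg_inj[OF PP_part[OF that(1)] _ _ PP_part[OF that(2)] _ _ a_notin] that by blast
    show "insert {Suc n} x \<noteq> mrg (Suc n) y Y" if "x \<in> PP n" "y \<in> PP n" "Y \<in> {Y. Y \<noteq> {} \<and> Y \<subseteq> sing y}" for x y Y
      using ins_mrg_disj[OF PP_part[OF that(1)] PP_part[OF that(2)] _ _ a_notin] that by blast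
    show "card (sing (insert {Suc n} x)) = Suc (card (sing x))" if "x \<in> PP n" for x
      using sing_ins[OF PP_part[OF that] a_notin] sing_fin[OF that] by simp
    show "card (sing (mrg (Suc n) x Y)) = card (sing x - Y)" if "x \<in> PP n" "Y \<in> {Y. Y \<noteq> {} \<and> Y \<subseteq> sing x}" for x Y
      using sing_mrg[OF PP_part[OF that(1)] a_notin] that by simp
  qed
  also have "\<dots> = card {P\<in>PP n. Suc (card (sing P)) = b} + (\<Sum>P\<in>PP n. cc (card (sing P)) b)"
  proof -
    have "card {Y \<in> {Y. Y \<noteq> {} \<and> Y \<subseteq> sing P}. card (sing P - Y) = b} = cc (card (sing P)) b" if "P \<in> PP n" for P
    proof -
      have "{Y \<in> {Y. Y \<noteq> {} \<and> Y \<subseteq> sing P}. card (sing P - Y) = b} = {Y. Y \<noteq> {} \<and> Y \<subseteq> sing P \<and> card (sing P - Y) = b}"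
        by auto
      then show ?thesis using cnt_part[OF sing_fin[OF that]] by simp
    qed
    then show ?thesis by simp
  qed
  finally show ?thesis .
qed

lemma combine:
  fixes s :: "'a \<Rightarrow> nat"
  assumes "finite A" "\<And>x. x\<in>A \<Longrightarrow> s x \<le> K"
  shows "card {x\<in>A. Suc (s x) = b} + (\<Sum>x\<in>A. cc (s x) b)
     = (\<Sum>a\<le>K. card {x\<in>A. s x = a} * ((if Suc a = b then 1 else 0) + cc a b))"
proof -
  have "card {x\<in>A. Suc (s x) = b} + (\<Sum>x\<in>A. cc (s x) b)
     = (\<Sum>x\<in>A. (\<lambda>a. (if Suc a = b then 1 else 0) + cc a b) (s x))"
    using card_filter_sum[OF assms(1), of "\<lambda>x. Suc (s x) = b"] by (simp add: sum.distrib)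
  also have "\<dots> = (\<Sum>a\<le>K. card {x\<in>A. s x = a} * ((if Suc a = b then 1 else 0) + cc a b))"
    by (rule sum_by_stat[OF assms])
  finally show ?thesis .
qed

lemma II_0: "II 0 = {({}, {})}"
proof (intro set_eqI iffI)
  fix T assume "T \<in> II 0"
  then obtain S F where T: "T = (S,F)" and pt: "perm_tableau 0 (S,F)" by (cases T) (auto simp: II_def)
  then have "S = {}" "F \<subseteq> cells 0 S" by (auto simp: perm_tableau_def Let_def)
  then have "F = {}" by (auto simp: cells_def)
  then show "T \<in> {({}, {})}" using T \<open>S = {}\<close> by simp
next
  fix T assume "T \<in> {({} :: nat set, {} :: (nat\<times>nat) set)}"
  then have T: "T = ({}, {})" by simp
  have "perm_tableau 0 T" by (simp add: T perm_tableau_def cols_def cells_def)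
  moreover have "inversions 0 T = {}" by (simp add: T inversions_def cols_def)
  ultimately show "T \<in> II 0" by (simp add: II_def tab_inv0)
qed

lemma PP_0: "PP 0 = {{}}" by (auto simp: PP_def partition_on_empty)

lemma NI_NP: "card {T\<in>II n. card (free n T) = b} = card {P\<in>PP n. card (sing P) = b}"
proof (induction n arbitrary: b)
  case 0
  have "free 0 ({}, {}) = {}" by (simp add: free_def)
  moreover have "sing ({} :: nat set set) = {}" by (simp add: sing_def)
  ultimately have "{T\<in>II 0. card (free 0 T) = b} = (if b = 0 then {({},{})} else {})"
    "{P\<in>PP 0. card (sing P) = b} = (if b = 0 then {{}} else {})" by (auto simp: II_0 PP_0)
  then show ?case by simp
next
  case (Suc n)
  let ?H = "\<lambda>a. (if Suc a = b then 1 else 0) + cc a b"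
  have "card {T\<in>II (Suc n). card (free (Suc n) T) = b}
     = (\<Sum>a\<le>n. card {T\<in>II n. card (free n T) = a} * ?H a)"
    unfolding NI_Suc by (rule combine[OF finite_II free_card])
  also have "\<dots> = (\<Sum>a\<le>n. card {P\<in>PP n. card (sing P) = a} * ?H a)" using Suc.IH by simp
  also have "\<dots> = card {P\<in>PP (Suc n). card (sing P) = b}"
    unfolding NP_Suc by (rule combine[OF finite_PP sing_card, symmetric])
  finally show ?case .
qed

lemma card_II_PP: "card (II n) = card (PP n)"
proof -
  have "card (II n) = (\<Sum>x\<in>II n. (\<lambda>a. 1::nat) (card (free n x)))" by simp
  also have "\<dots> = (\<Sum>a\<le>n. card {T\<in>II n. card (free n T) = a} * 1)"
    by (rule sum_by_stat[OF finite_II free_card])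
  also have "\<dots> = (\<Sum>a\<le>n. card {P\<in>PP n. card (sing P) = a} * 1)" using NI_NP by simp
  also have "\<dots> = (\<Sum>x\<in>PP n. (\<lambda>a. 1::nat) (card (sing x)))"
    by (rule sum_by_stat[OF finite_PP sing_card, symmetric])
  also have "\<dots> = card (PP n)" by simp
  finally show ?thesis .
qed

theorem theorem3p2:
  fixes n :: nat
  assumes "n \<ge> 1"
  shows "card {T. perm_tableau n T \<and> tab_inv n T = 0} = card {P. partition_on {1..n} P}"
  using card_II_PP[of n] by (simp add: II_def PP_def)


end
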